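(* If $\Gamma$ is a finite vertex-transitive graph with $\operatorname{Aut}(\Gamma)\cong A_5$, then the action of $\operatorname{Aut}(\Gamma)$ on $V(\Gamma)$ is imprimitive.
   Context: For $G$ transitive on $X$, a block is $B\subset X$ with $gB=B$ or $gB\cap B=\emptyset$ for all $g\in G$; it is nontrivial if $1<|B|<|X|$; the action is imprimitive if a nontrivial block exists and primitive otherwise. $A_5$ is the alternating group on $5$ letters. *)

theory Defs
  imports "HOL-Algebra.Sym_Groups"
begin

definition simple_graph :: "'a set \<Rightarrow> ('a \<Rightarrow> 'a \<Rightarrow> bool) \<Rightarrow> bool" where
  "simple_graph V E \<longleftrightarrow>
     (\<forall>u v. E u v \<longrightarrow> u \<in> V \<and> v \<in> V) \<and>
     (\<forall>u v. E u v \<longrightarrow> E v u) \<and> (\<forall>v. \<not> E v v)"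

definition graph_auts :: "'a set \<Rightarrow> ('a \<Rightarrow> 'a \<Rightarrow> bool) \<Rightarrow> ('a \<Rightarrow> 'a) set" where
  "graph_auts V E = {g. g permutes V \<and> (\<forall>u\<in>V. \<forall>v\<in>V. E (g u) (g v) \<longleftrightarrow> E u v)}"

definition Aut :: "'a set \<Rightarrow> ('a \<Rightarrow> 'a \<Rightarrow> bool) \<Rightarrow> ('a \<Rightarrow> 'a) monoid" where
  "Aut V E = \<lparr> carrier = graph_auts V E, monoid.mult = (\<circ>), one = id \<rparr>"

definition vertex_transitive :: "'a set \<Rightarrow> ('a \<Rightarrow> 'a \<Rightarrow> bool) \<Rightarrow> bool" where
  "vertex_transitive V E \<longleftrightarrow> (\<forall>u\<in>V. \<forall>v\<in>V. \<exists>g\<in>graph_auts V E. g u = v)"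

definition is_block :: "('a \<Rightarrow> 'a) set \<Rightarrow> 'a set \<Rightarrow> 'a set \<Rightarrow> bool" where
  "is_block G X B \<longleftrightarrow> B \<subseteq> X \<and> (\<forall>g\<in>G. g ` B = B \<or> g ` B \<inter> B = {})"

definition imprimitive :: "('a \<Rightarrow> 'a) set \<Rightarrow> 'a set \<Rightarrow> bool" where
  "imprimitive G X \<longleftrightarrow> (\<exists>B. is_block G X B \<and> 1 < card B \<and> card B < card X)"

end

theory Submission
  imports Defs "HOL-Algebra.Group_Action"
begin

definition pgrp :: "('a \<Rightarrow> 'a) set \<Rightarrow> ('a \<Rightarrow> 'a) monoid" where
  "pgrp H = \<lparr>carrier = H, monoid.mult = (\<circ>), one = id\<rparr>"

definition is_pgroup :: "'a set \<Rightarrow> ('a \<Rightarrow> 'a) set \<Rightarrow> bool" where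
  "is_pgroup V H \<longleftrightarrow> (\<forall>h\<in>H. h permutes V) \<and> id \<in> H \<and> (\<forall>g\<in>H. \<forall>h\<in>H. g \<circ> h \<in> H)
     \<and> (\<forall>h\<in>H. Hilbert_Choice.inv h \<in> H)"

lemma pg_perm: "is_pgroup V H \<Longrightarrow> h \<in> H \<Longrightarrow> h permutes V"
  by (simp add: is_pgroup_def)
lemma pg_comp: "is_pgroup V H \<Longrightarrow> g \<in> H \<Longrightarrow> h \<in> H \<Longrightarrow> g \<circ> h \<in> H"
  by (simp add: is_pgroup_def)
lemma pg_inv: "is_pgroup V H \<Longrightarrow> h \<in> H \<Longrightarrow> Hilbert_Choice.inv h \<in> H"
  by (simp add: is_pgroup_def)
lemma pg_id: "is_pgroup V H \<Longrightarrow> id \<in> H"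
  by (simp add: is_pgroup_def)

lemma pgroup_group:
  assumes "is_pgroup V H" shows "group (pgrp H)"
proof (rule groupI)
  show "\<And>x y. x \<in> carrier (pgrp H) \<Longrightarrow> y \<in> carrier (pgrp H) \<Longrightarrow> x \<otimes>\<^bsub>pgrp H\<^esub> y \<in> carrier (pgrp H)"
    using assms by (auto simp: pgrp_def is_pgroup_def)
  show "\<one>\<^bsub>pgrp H\<^esub> \<in> carrier (pgrp H)" using assms by (auto simp: pgrp_def is_pgroup_def)
  show "\<And>x y z. x \<in> carrier (pgrp H) \<Longrightarrow> y \<in> carrier (pgrp H) \<Longrightarrow> z \<in> carrier (pgrp H) \<Longrightarrow>
        x \<otimes>\<^bsub>pgrp H\<^esub> y \<otimes>\<^bsub>pgrp H\<^esub> z = x \<otimes>\<^bsub>pgrp H\<^esub> (y \<otimes>\<^bsub>pgrp H\<^esub> z)"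
    by (simp add: pgrp_def o_assoc)
  show "\<And>x. x \<in> carrier (pgrp H) \<Longrightarrow> \<one>\<^bsub>pgrp H\<^esub> \<otimes>\<^bsub>pgrp H\<^esub> x = x"
    by (simp add: pgrp_def)
  show "\<And>x. x \<in> carrier (pgrp H) \<Longrightarrow> \<exists>y\<in>carrier (pgrp H). y \<otimes>\<^bsub>pgrp H\<^esub> x = \<one>\<^bsub>pgrp H\<^esub>"
  proof -
    fix x assume "x \<in> carrier (pgrp H)"
    hence x: "x \<in> H" by (simp add: pgrp_def)
    hence "x permutes V" "Hilbert_Choice.inv x \<in> H" using assms by (auto simp: is_pgroup_def)
    thus "\<exists>y\<in>carrier (pgrp H). y \<otimes>\<^bsub>pgrp H\<^esub> x = \<one>\<^bsub>pgrp H\<^esub>"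
      by (intro bexI[of _ "Hilbert_Choice.inv x"]) (auto simp: pgrp_def permutes_inv_o)
  qed
qed

lemma pgroup_action:
  assumes "is_pgroup V H" shows "group_action (pgrp H) V (\<lambda>h. restrict h V)"
  unfolding group_action_def
proof (rule group_hom.intro)
  show "group (pgrp H)" by (rule pgroup_group[OF assms])
  show "group (BijGroup V)" by (rule group_BijGroup)
  show "group_hom_axioms (pgrp H) (BijGroup V) (\<lambda>h. restrict h V)"
  proof
    have B: "restrict h V \<in> Bij V" if "h \<in> H" for h
    proof -
      have "h permutes V" using that assms by (auto simp: is_pgroup_def)
      hence "bij_betw h V V" by (simp add: permutes_imp_bij)
      moreover have "bij_betw (restrict h V) V V = bij_betw h V V" by (rule bij_betw_cong) simp
      ultimately have "bij_betw (restrict h V) V V" by simp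
      thus ?thesis by (simp add: Bij_def)
    qed
    show "(\<lambda>h. restrict h V) \<in> hom (pgrp H) (BijGroup V)"
    proof (rule homI)
      show "\<And>x. x \<in> carrier (pgrp H) \<Longrightarrow> restrict x V \<in> carrier (BijGroup V)"
        using B by (simp add: pgrp_def BijGroup_def)
      fix x y assume xy: "x \<in> carrier (pgrp H)" "y \<in> carrier (pgrp H)"
      hence "x \<in> H" "y \<in> H" by (auto simp: pgrp_def)
      moreover have "y permutes V" using \<open>y \<in> H\<close> assms by (auto simp: is_pgroup_def)
      ultimately show "restrict (x \<otimes>\<^bsub>pgrp H\<^esub> y) V = restrict x V \<otimes>\<^bsub>BijGroup V\<^esub> restrict y V"
        using B by (auto simp: pgrp_def BijGroup_def compose_def permutes_in_image)
    qed
  qed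
qed

definition Orb :: "('a \<Rightarrow> 'a) set \<Rightarrow> 'a \<Rightarrow> 'a set" where "Orb H w = (\<lambda>h. h w) ` H"
definition Stb :: "('a \<Rightarrow> 'a) set \<Rightarrow> 'a \<Rightarrow> ('a \<Rightarrow> 'a) set" where "Stb H w = {h\<in>H. h w = w}"
definition Fx :: "'a set \<Rightarrow> ('a \<Rightarrow> 'a) \<Rightarrow> 'a set" where "Fx V h = {x\<in>V. h x = x}"
definition FixH :: "'a set \<Rightarrow> ('a \<Rightarrow> 'a) set \<Rightarrow> 'a set" where "FixH V H = {x\<in>V. \<forall>h\<in>H. h x = x}"

lemma orbit_eq: "w \<in> V \<Longrightarrow> orbit (pgrp H) (\<lambda>h. restrict h V) w = Orb H w"
  by (auto simp: orbit_def Orb_def pgrp_def)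

lemma stab_eq: "w \<in> V \<Longrightarrow> stabilizer (pgrp H) (\<lambda>h. restrict h V) w = Stb H w"
  by (auto simp: stabilizer_def Stb_def pgrp_def)

lemma orbit_stab:
  assumes "is_pgroup V H" "finite H" "w \<in> V"
  shows "card (Orb H w) * card (Stb H w) = card H"
proof -
  interpret group_action "pgrp H" V "\<lambda>h. restrict h V" by (rule pgroup_action[OF assms(1)])
  have "card (orbit (pgrp H) (\<lambda>h. restrict h V) w) * card (stabilizer (pgrp H) (\<lambda>h. restrict h V) w) = order (pgrp H)"
    by (rule orbit_stabilizer_theorem[OF assms(3)])
  moreover have "carrier (pgrp H) = H" by (simp add: pgrp_def)
  ultimately show ?thesis unfolding orbit_eq[OF assms(3)] stab_eq[OF assms(3)] order_def by simp
qed

lemma burnside':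
  assumes "is_pgroup V H" "finite H" "finite V"
  shows "card {Orb H x | x. x \<in> V} * card H = (\<Sum>h\<in>H. card (Fx V h))"
proof -
  interpret group_action "pgrp H" V "\<lambda>h. restrict h V" by (rule pgroup_action[OF assms(1)])
  have "orbits (pgrp H) V (\<lambda>h. restrict h V) = {Orb H x | x. x \<in> V}"
    unfolding orbits_def
  proof (intro Collect_cong iffI)
    fix y assume "\<exists>x. y = orbit (pgrp H) (\<lambda>h. restrict h V) x \<and> x \<in> V"
    then obtain x where "y = orbit (pgrp H) (\<lambda>h. restrict h V) x" "x \<in> V" by blast
    thus "\<exists>x. y = Orb H x \<and> x \<in> V" using orbit_eq[of x V H] by blast
  next
    fix y assume "\<exists>x. y = Orb H x \<and> x \<in> V"
    then obtain x where "y = Orb H x" "x \<in> V" by blast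
    thus "\<exists>x. y = orbit (pgrp H) (\<lambda>h. restrict h V) x \<and> x \<in> V" using orbit_eq[of x V H] by blast
  qed
  moreover have "invariants V (\<lambda>h. restrict h V) h = Fx V h" for h
    by (auto simp: invariants_def Fx_def)
  moreover have "carrier (pgrp H) = H" by (simp add: pgrp_def)
  moreover have "card (orbits (pgrp H) V (\<lambda>h. restrict h V)) * order (pgrp H) =
     (\<Sum>g \<in> carrier (pgrp H). card(invariants V (\<lambda>h. restrict h V) g))"
    by (rule burnside) (use assms in \<open>simp_all add: pgrp_def\<close>)
  ultimately show ?thesis unfolding order_def by simp
qed

lemma Orb_sub: "is_pgroup V H \<Longrightarrow> w \<in> V \<Longrightarrow> Orb H w \<subseteq> V"
proof
  fix x assume H: "is_pgroup V H" and w: "w \<in> V" and "x \<in> Orb H w"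
  then obtain h where h: "h \<in> H" "x = h w" by (auto simp: Orb_def)
  have "h permutes V" using H h(1) by (rule pg_perm)
  thus "x \<in> V" using h(2) w by (simp add: permutes_in_image)
qed

lemma Orb_self: "is_pgroup V H \<Longrightarrow> w \<in> Orb H w"
proof -
  assume "is_pgroup V H"
  hence "id \<in> H" by (rule pg_id)
  hence "\<exists>h\<in>H. w = h w" by (intro bexI[of _ id]) auto
  thus ?thesis by (simp add: Orb_def image_iff)
qed

lemma Orb_eq:
  assumes "is_pgroup V H" "w \<in> V" "u \<in> Orb H w"
  shows "Orb H u = Orb H w"
proof -
  obtain h where h: "h \<in> H" "u = h w" using assms(3) by (auto simp: Orb_def)
  have hp: "h permutes V" using h assms(1) by (simp add: is_pgroup_def)
  show ?thesis
  proof
    show "Orb H u \<subseteq> Orb H w"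
    proof
      fix z assume "z \<in> Orb H u"
      then obtain g where g: "g \<in> H" "z = g u" by (auto simp: Orb_def)
      have "g \<circ> h \<in> H" using g h assms(1) by (simp add: is_pgroup_def)
      moreover have "(g \<circ> h) w = z" using g h by simp
      ultimately show "z \<in> Orb H w" unfolding Orb_def by (intro image_eqI[of z _ "g \<circ> h"]) auto
    qed
    show "Orb H w \<subseteq> Orb H u"
    proof
      fix z assume "z \<in> Orb H w"
      then obtain g where g: "g \<in> H" "z = g w" by (auto simp: Orb_def)
      have "g \<circ> Hilbert_Choice.inv h \<in> H" using g h assms(1) by (simp add: is_pgroup_def)
      moreover have "(g \<circ> Hilbert_Choice.inv h) u = z" using g h hp by (simp add: permutes_inverses(2))
      ultimately show "z \<in> Orb H u" unfolding Orb_def by (intro image_eqI[of z _ "g \<circ> Hilbert_Choice.inv h"]) auto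
    qed
  qed
qed

lemma Orb_disj:
  assumes "is_pgroup V H" "w \<in> V" "u \<in> V" "Orb H u \<inter> Orb H w \<noteq> {}"
  shows "Orb H u = Orb H w"
proof -
  obtain z where "z \<in> Orb H u" "z \<in> Orb H w" using assms(4) by blast
  thus ?thesis using Orb_eq[OF assms(1) assms(2)] Orb_eq[OF assms(1) assms(3)] by metis
qed

lemma FixH_Orb: "is_pgroup V H \<Longrightarrow> x \<in> V \<Longrightarrow> x \<in> FixH V H \<longleftrightarrow> Orb H x = {x}"
  using Orb_self[of V H x] by (auto simp: FixH_def Orb_def)

lemma dvd_nonfixed:
  assumes "is_pgroup V H" "finite V" "\<And>x. x \<in> V - FixH V H \<Longrightarrow> d dvd card (Orb H x)"
  shows "d dvd card (V - FixH V H)"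
proof -
  let ?C = "Orb H ` (V - FixH V H)"
  have U: "\<Union>?C = V - FixH V H"
  proof
    show "\<Union>?C \<subseteq> V - FixH V H"
    proof
      fix y assume "y \<in> \<Union>?C"
      then obtain x where x: "x \<in> V - FixH V H" "y \<in> Orb H x" by auto
      have yV: "y \<in> V" using Orb_sub[OF assms(1)] x by blast
      have "Orb H y = Orb H x" using Orb_eq[OF assms(1)] x by blast
      hence "y \<notin> FixH V H" using x FixH_Orb[OF assms(1)] yV Orb_self[OF assms(1), of x] by auto
      thus "y \<in> V - FixH V H" using yV by blast
    qed
    show "V - FixH V H \<subseteq> \<Union>?C" using Orb_self[OF assms(1)] by blast
  qed
  have fin: "finite ?C" using assms(2) by simp
  have fin2: "\<And>A. A\<in>?C \<Longrightarrow> finite A" using assms(2) Orb_sub[OF assms(1)] finite_subset by blast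
  have disj: "pairwise disjnt ?C"
    unfolding pairwise_def disjnt_def using Orb_disj[OF assms(1)] by blast
  have "card (\<Union>?C) = sum card ?C" by (rule card_Union_disjoint[OF disj fin2])
  moreover have "d dvd sum card ?C" using assms(3) by (auto intro!: dvd_sum)
  ultimately show ?thesis using U by simp
qed


definition A5L :: "(nat \<Rightarrow> nat) list" where
"A5L = [
  (id),
  (transpose 1 2 \<circ> transpose 2 3),
  (transpose 1 3 \<circ> transpose 3 2),
  (transpose 1 2 \<circ> transpose 2 4),
  (transpose 1 4 \<circ> transpose 4 2),
  (transpose 1 2 \<circ> transpose 2 5),
  (transpose 1 5 \<circ> transpose 5 2),
  (transpose 1 3 \<circ> transpose 3 4),
  (transpose 1 4 \<circ> transpose 4 3),
  (transpose 1 3 \<circ> transpose 3 5),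
  (transpose 1 5 \<circ> transpose 5 3),
  (transpose 1 4 \<circ> transpose 4 5),
  (transpose 1 5 \<circ> transpose 5 4),
  (transpose 2 3 \<circ> transpose 3 4),
  (transpose 2 4 \<circ> transpose 4 3),
  (transpose 2 3 \<circ> transpose 3 5),
  (transpose 2 5 \<circ> transpose 5 3),
  (transpose 2 4 \<circ> transpose 4 5),
  (transpose 2 5 \<circ> transpose 5 4),
  (transpose 3 4 \<circ> transpose 4 5),
  (transpose 3 5 \<circ> transpose 5 4),
  (transpose 1 2 \<circ> transpose 3 4),
  (transpose 1 3 \<circ> transpose 2 4),
  (transpose 1 4 \<circ> transpose 2 3),
  (transpose 1 2 \<circ> transpose 3 5),
  (transpose 1 3 \<circ> transpose 2 5),
  (transpose 1 5 \<circ> transpose 2 3),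
  (transpose 1 2 \<circ> transpose 4 5),
  (transpose 1 4 \<circ> transpose 2 5),
  (transpose 1 5 \<circ> transpose 2 4),
  (transpose 1 3 \<circ> transpose 4 5),
  (transpose 1 4 \<circ> transpose 3 5),
  (transpose 1 5 \<circ> transpose 3 4),
  (transpose 2 3 \<circ> transpose 4 5),
  (transpose 2 4 \<circ> transpose 3 5),
  (transpose 2 5 \<circ> transpose 3 4),
  (transpose 1 2 \<circ> transpose 2 3 \<circ> transpose 3 4 \<circ> transpose 4 5),
  (transpose 1 2 \<circ> transpose 2 3 \<circ> transpose 3 5 \<circ> transpose 5 4),
  (transpose 1 2 \<circ> transpose 2 4 \<circ> transpose 4 3 \<circ> transpose 3 5),
  (transpose 1 2 \<circ> transpose 2 4 \<circ> transpose 4 5 \<circ> transpose 5 3),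
  (transpose 1 2 \<circ> transpose 2 5 \<circ> transpose 5 3 \<circ> transpose 3 4),
  (transpose 1 2 \<circ> transpose 2 5 \<circ> transpose 5 4 \<circ> transpose 4 3),
  (transpose 1 3 \<circ> transpose 3 2 \<circ> transpose 2 4 \<circ> transpose 4 5),
  (transpose 1 3 \<circ> transpose 3 2 \<circ> transpose 2 5 \<circ> transpose 5 4),
  (transpose 1 3 \<circ> transpose 3 4 \<circ> transpose 4 2 \<circ> transpose 2 5),
  (transpose 1 3 \<circ> transpose 3 4 \<circ> transpose 4 5 \<circ> transpose 5 2),
  (transpose 1 3 \<circ> transpose 3 5 \<circ> transpose 5 2 \<circ> transpose 2 4),
  (transpose 1 3 \<circ> transpose 3 5 \<circ> transpose 5 4 \<circ> transpose 4 2),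
  (transpose 1 4 \<circ> transpose 4 2 \<circ> transpose 2 3 \<circ> transpose 3 5),
  (transpose 1 4 \<circ> transpose 4 2 \<circ> transpose 2 5 \<circ> transpose 5 3),
  (transpose 1 4 \<circ> transpose 4 3 \<circ> transpose 3 2 \<circ> transpose 2 5),
  (transpose 1 4 \<circ> transpose 4 3 \<circ> transpose 3 5 \<circ> transpose 5 2),
  (transpose 1 4 \<circ> transpose 4 5 \<circ> transpose 5 2 \<circ> transpose 2 3),
  (transpose 1 4 \<circ> transpose 4 5 \<circ> transpose 5 3 \<circ> transpose 3 2),
  (transpose 1 5 \<circ> transpose 5 2 \<circ> transpose 2 3 \<circ> transpose 3 4),
  (transpose 1 5 \<circ> transpose 5 2 \<circ> transpose 2 4 \<circ> transpose 4 3),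
  (transpose 1 5 \<circ> transpose 5 3 \<circ> transpose 3 2 \<circ> transpose 2 4),
  (transpose 1 5 \<circ> transpose 5 3 \<circ> transpose 3 4 \<circ> transpose 4 2),
  (transpose 1 5 \<circ> transpose 5 4 \<circ> transpose 4 2 \<circ> transpose 2 3),
  (transpose 1 5 \<circ> transpose 5 4 \<circ> transpose 4 3 \<circ> transpose 3 2)]"

definition ls :: "(nat \<Rightarrow> nat) \<Rightarrow> nat list" where "ls p = map p [1,2,3,4,5]"

lemma A5L_in: "\<forall>p \<in> set A5L. p permutes {1..5} \<and> evenperm p"
  by (simp add: A5L_def permutes_compose permutes_swap_id evenperm_comp permutation_compose permutation_swap_id evenperm_swap)

definition LL :: "nat list list" where "LL = map ls A5L"

lemma LL_eq: "LL = [[1,2,3,4,5],[2,3,1,4,5],[3,1,2,4,5],[2,4,3,1,5],[4,1,3,2,5],[2,5,3,4,1],[5,1,3,4,2],[3,2,4,1,5],[4,2,1,3,5],[3,2,5,4,1],[5,2,1,4,3],[4,2,3,5,1],[5,2,3,1,4],[1,3,4,2,5],[1,4,2,3,5],[1,3,5,4,2],[1,5,2,4,3],[1,4,3,5,2],[1,5,3,2,4],[1,2,4,5,3],[1,2,5,3,4],[2,1,4,3,5],[3,4,1,2,5],[4,3,2,1,5],[2,1,5,4,3],[3,5,1,4,2],[5,3,2,4,1],[2,1,3,5,4],[4,5,3,1,2],[5,4,3,2,1],[3,2,1,5,4],[4,2,5,1,3],[5,2,4,3,1],[1,3,2,5,4],[1,4,5,2,3],[1,5,4,3,2],[2,3,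4,5,1],[2,3,5,1,4],[2,4,5,3,1],[2,4,1,5,3],[2,5,4,1,3],[2,5,1,3,4],[3,4,2,5,1],[3,5,2,1,4],[3,5,4,2,1],[3,1,4,5,2],[3,4,5,1,2],[3,1,5,2,4],[4,3,5,2,1],[4,5,1,2,3],[4,5,2,3,1],[4,1,5,3,2],[4,3,1,5,2],[4,1,2,5,3],[5,3,4,1,2],[5,4,1,3,2],[5,4,2,1,3],[5,1,4,2,3],[5,3,1,2,4],[5,1,2,3,4]]"
  by (simp add: LL_def A5L_def ls_def transpose_def)

lemma LL_dist: "distinct LL" by (simp add: LL_eq)

definition cmp :: "nat list \<Rightarrow> nat list \<Rightarrow> nat list" where
  "cmp l1 l2 = map (\<lambda>i. l1 ! (i - 1)) l2"

definition I5 :: "nat list" where "I5 = [1,2,3,4,5]"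

lemma K1: "\<forall>l \<in> set LL. l = I5 \<or> cmp l l = I5 \<or> cmp l (cmp l l) = I5 \<or> cmp l (cmp l (cmp l (cmp l l))) = I5"
  unfolding LL_eq by code_simp

lemma K2: "length (filter (\<lambda>l. l \<noteq> I5 \<and> cmp l l = I5) LL) = 15"
   "length (filter (\<lambda>l. l \<noteq> I5 \<and> cmp l (cmp l l) = I5) LL) = 20"
   "length (filter (\<lambda>l. l \<noteq> I5 \<and> cmp l (cmp l (cmp l (cmp l l))) = I5) LL) = 24"
  unfolding LL_eq by code_simp+

lemma K3: "\<forall>t \<in> set LL. t \<noteq> I5 \<and> cmp t t = I5 \<longrightarrow> length (filter (\<lambda>g. cmp g t = cmp t g) LL) = 4"
  unfolding LL_eq by code_simp

lemma K4: "\<forall>t \<in> set LL. cmp t t = I5 \<longrightarrow> (\<exists>a \<in> set LL. cmp a (cmp a a) = I5 \<and> cmp (cmp a (cmp a t)) (cmp (cmp a (cmp a t)) (cmp a (cmp a t))) = I5)"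
  unfolding LL_eq by code_simp


lemma A5L_dist: "distinct A5L"
  using LL_dist by (simp add: LL_def distinct_map)

lemma car_A5: "carrier (alt_group 5) = set A5L"
proof -
  have sub: "set A5L \<subseteq> carrier (alt_group 5)" using A5L_in by (auto simp: alt_group_carrier)
  have "length A5L = 60" by (simp add: A5L_def)
  hence c1: "card (set A5L) = 60" using distinct_card[OF A5L_dist] by simp
  have "2 * card (carrier (alt_group 5)) = fact 5" by (rule alt_group_card_carrier) simp
  hence c2: "card (carrier (alt_group 5)) = 60" by (simp add: fact_numeral)
  hence fin: "finite (carrier (alt_group 5))" by (intro card_ge_0_finite) simp
  show ?thesis using card_subset_eq[OF fin sub] c1 c2 by simp
qed

lemma ls_eq:
  assumes "p permutes {1..5}" "q permutes {1..5}" "ls p = ls q"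
  shows "p = q"
proof
  fix x
  show "p x = q x"
  proof (cases "x \<in> {1..5}")
    case True
    hence "x = 1 \<or> x = 2 \<or> x = 3 \<or> x = 4 \<or> x = 5" by auto
    moreover have "p 1 = q 1 \<and> p 2 = q 2 \<and> p 3 = q 3 \<and> p 4 = q 4 \<and> p 5 = q 5"
      using assms(3) by (simp add: ls_def)
    ultimately show ?thesis by (elim disjE) simp_all
  next
    case False
    thus ?thesis using assms(1,2) by (simp add: permutes_not_in)
  qed
qed

lemma ls_nth: "i \<in> {1..5} \<Longrightarrow> ls p ! (i - 1) = p i"
proof -
  assume "i \<in> {1..5}"
  hence "i = 1 \<or> i = 2 \<or> i = 3 \<or> i = 4 \<or> i = 5" by auto
  thus ?thesis by (elim disjE) (simp_all add: ls_def)
qed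

lemma ls_comp:
  assumes "q permutes {1..5}"
  shows "ls (p \<circ> q) = cmp (ls p) (ls q)"
proof -
  have "\<forall>i\<in>{1..5}. q i \<in> {1..5}"
  proof
    fix i :: nat assume "i \<in> {1..5}" thus "q i \<in> {1..5}" using assms by (simp only: permutes_in_image)
  qed
  hence "\<forall>i\<in>set [1,2,3,4,5::nat]. ls p ! (q i - 1) = p (q i)" using ls_nth by auto
  thus ?thesis by (simp add: ls_def cmp_def)
qed

lemma ls_compS: "q permutes {Suc 0..5} \<Longrightarrow> ls (p \<circ> q) = cmp (ls p) (ls q)"
  using ls_comp[of q p] by simp

lemma ls_id: "ls id = I5" by (simp add: ls_def I5_def)

lemma perm5: "p \<in> set A5L \<Longrightarrow> p permutes {1..5}" using A5L_in by blast

lemma pc: "p permutes {1..5} \<Longrightarrow> q permutes {1..5} \<Longrightarrow> p \<circ> q permutes {1..5}"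
  by (rule permutes_compose)

lemma pcS: "p permutes {Suc 0..5} \<Longrightarrow> q permutes {Suc 0..5} \<Longrightarrow> p \<circ> q permutes {Suc 0..5}"
  by (rule permutes_compose)

lemma id_iff: "p permutes {1..5} \<Longrightarrow> (p = id) \<longleftrightarrow> ls p = I5"
  using ls_eq[of p id] ls_id permutes_id by metis

lemma card_filter:
  "card {p \<in> set A5L. Q (ls p)} = length (filter Q LL)"
proof -
  have inj: "inj_on ls (set A5L)" using LL_dist by (simp add: LL_def distinct_map)
  have "ls ` {p \<in> set A5L. Q (ls p)} = {l \<in> set LL. Q l}" by (auto simp: LL_def)
  hence "card {p \<in> set A5L. Q (ls p)} = card {l \<in> set LL. Q l}"
    using card_image[OF inj_on_subset[OF inj, of "{p \<in> set A5L. Q (ls p)}"]] by auto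
  also have "\<dots> = length (filter Q LL)" using LL_dist distinct_length_filter[of LL Q]
    by (simp add: Collect_conj_eq Int_commute)
  finally show ?thesis .
qed

lemma lsLL: "p \<in> set A5L \<Longrightarrow> ls p \<in> set LL" by (simp add: LL_def)

lemma eqs:
  assumes pA: "p \<in> set A5L"
  shows "(p = id \<longleftrightarrow> ls p = I5) \<and> (p \<circ> p = id \<longleftrightarrow> cmp (ls p) (ls p) = I5) \<and>
     (p \<circ> (p \<circ> p) = id \<longleftrightarrow> cmp (ls p) (cmp (ls p) (ls p)) = I5) \<and>
     (p \<circ> (p \<circ> (p \<circ> (p \<circ> p))) = id \<longleftrightarrow> cmp (ls p) (cmp (ls p) (cmp (ls p) (cmp (ls p) (ls p)))) = I5)"
proof -
  have P: "p permutes {1..5}" using pA by (rule perm5)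
  have P2a: "p \<circ> p permutes {1..5}" by (rule pc[OF P P])
  have P2b: "p \<circ> (p \<circ> p) permutes {1..5}" by (rule pc[OF P P2a])
  have P2c: "p \<circ> (p \<circ> (p \<circ> p)) permutes {1..5}" by (rule pc[OF P P2b])
  have P2d: "p \<circ> (p \<circ> (p \<circ> (p \<circ> p))) permutes {1..5}" by (rule pc[OF P P2c])
  have l1: "ls (p \<circ> p) = cmp (ls p) (ls p)" by (rule ls_comp[OF P])
  have l2: "ls (p \<circ> (p \<circ> p)) = cmp (ls p) (cmp (ls p) (ls p))" using ls_comp[OF P2a, of p] l1 by simp
  have l3: "ls (p \<circ> (p \<circ> (p \<circ> p))) = cmp (ls p) (cmp (ls p) (cmp (ls p) (ls p)))" using ls_comp[OF P2b, of p] l2 by simp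
  have l4: "ls (p \<circ> (p \<circ> (p \<circ> (p \<circ> p)))) = cmp (ls p) (cmp (ls p) (cmp (ls p) (cmp (ls p) (ls p))))" using ls_comp[OF P2c, of p] l3 by simp
  show ?thesis using id_iff[OF P] id_iff[OF P2a] id_iff[OF P2b] id_iff[OF P2d] l1 l2 l4 by simp
qed

lemma F1: "p \<in> carrier (alt_group 5) \<Longrightarrow>
   p = id \<or> p \<circ> p = id \<or> p \<circ> (p \<circ> p) = id \<or> p \<circ> (p \<circ> (p \<circ> (p \<circ> p))) = id"
proof -
  assume "p \<in> carrier (alt_group 5)"
  hence pA: "p \<in> set A5L" by (simp add: car_A5)
  hence P: "p permutes {1..5}" by (rule perm5)
  have P2a: "p \<circ> p permutes {1..5}" by (rule pc[OF P P])
  have P2b: "p \<circ> (p \<circ> p) permutes {1..5}" by (rule pc[OF P P2a])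
  have P2c: "p \<circ> (p \<circ> (p \<circ> p)) permutes {1..5}" by (rule pc[OF P P2b])
  have P2d: "p \<circ> (p \<circ> (p \<circ> (p \<circ> p))) permutes {1..5}" by (rule pc[OF P P2c])
  note P2 = P2a P2b P2c P2d
  have "ls p = I5 \<or> cmp (ls p) (ls p) = I5 \<or> cmp (ls p) (cmp (ls p) (ls p)) = I5 \<or>
     cmp (ls p) (cmp (ls p) (cmp (ls p) (cmp (ls p) (ls p)))) = I5"
    using K1 lsLL[OF pA] by blast
  thus ?thesis using P P2 by (simp add: id_iff ls_comp)
qed

lemma F2:
  "card {p \<in> carrier (alt_group 5). p \<noteq> id \<and> p \<circ> p = id} = 15"
  "card {p \<in> carrier (alt_group 5). p \<noteq> id \<and> p \<circ> (p \<circ> p) = id} = 20"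
  "card {p \<in> carrier (alt_group 5). p \<noteq> id \<and> p \<circ> (p \<circ> (p \<circ> (p \<circ> p))) = id} = 24"
proof -
  have e1: "{p \<in> carrier (alt_group 5). p \<noteq> id \<and> p \<circ> p = id} =
       {p \<in> set A5L. (\<lambda>l. l \<noteq> I5 \<and> cmp l l = I5) (ls p)}"
    unfolding car_A5 by (rule Collect_cong) (use eqs in blast)
  have e2: "{p \<in> carrier (alt_group 5). p \<noteq> id \<and> p \<circ> (p \<circ> p) = id} =
       {p \<in> set A5L. (\<lambda>l. l \<noteq> I5 \<and> cmp l (cmp l l) = I5) (ls p)}"
    unfolding car_A5 by (rule Collect_cong) (use eqs in blast)
  have e3: "{p \<in> carrier (alt_group 5). p \<noteq> id \<and> p \<circ> (p \<circ> (p \<circ> (p \<circ> p))) = id} =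
       {p \<in> set A5L. (\<lambda>l. l \<noteq> I5 \<and> cmp l (cmp l (cmp l (cmp l l))) = I5) (ls p)}"
    unfolding car_A5 by (rule Collect_cong) (use eqs in blast)
  show "card {p \<in> carrier (alt_group 5). p \<noteq> id \<and> p \<circ> p = id} = 15"
    unfolding e1 using card_filter[of "\<lambda>l. l \<noteq> I5 \<and> cmp l l = I5"] K2(1) by simp
  show "card {p \<in> carrier (alt_group 5). p \<noteq> id \<and> p \<circ> (p \<circ> p) = id} = 20"
    unfolding e2 using card_filter[of "\<lambda>l. l \<noteq> I5 \<and> cmp l (cmp l l) = I5"] K2(2) by simp
  show "card {p \<in> carrier (alt_group 5). p \<noteq> id \<and> p \<circ> (p \<circ> (p \<circ> (p \<circ> p))) = id} = 24"
    unfolding e3 using card_filter[of "\<lambda>l. l \<noteq> I5 \<and> cmp l (cmp l (cmp l (cmp l l))) = I5"] K2(3) by simp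
qed

lemma F3:
  assumes "t \<in> carrier (alt_group 5)" "t \<noteq> id" "t \<circ> t = id"
  shows "card {g \<in> carrier (alt_group 5). g \<circ> t = t \<circ> g} = 4"
proof -
  have tA: "t \<in> set A5L" using assms(1) by (simp add: car_A5)
  hence T: "t permutes {1..5}" by (rule perm5)
  have e: "{g \<in> carrier (alt_group 5). g \<circ> t = t \<circ> g} =
       {g \<in> set A5L. (\<lambda>l. cmp l (ls t) = cmp (ls t) l) (ls g)}"
    unfolding car_A5
  proof (intro Collect_cong conj_cong refl)
    fix g assume "g \<in> set A5L"
    hence Gp: "g permutes {1..5}" by (rule perm5)
    have "g \<circ> t = t \<circ> g \<longleftrightarrow> ls (g \<circ> t) = ls (t \<circ> g)"
      using ls_eq[OF pc[OF T Gp] pc[OF Gp T]] by metis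
    thus "(g \<circ> t = t \<circ> g) = (cmp (ls g) (ls t) = cmp (ls t) (ls g))"
      using ls_comp[OF T, of g] ls_comp[OF Gp, of t] by simp
  qed
  have "ls t \<noteq> I5 \<and> cmp (ls t) (ls t) = I5" using assms T by (simp add: id_iff ls_comp ls_compS pc pcS)
  hence "length (filter (\<lambda>g. cmp g (ls t) = cmp (ls t) g) LL) = 4" using K3 lsLL[OF tA] by blast
  thus ?thesis unfolding e using card_filter[of "\<lambda>l. cmp l (ls t) = cmp (ls t) l"] by simp
qed

lemma F4:
  assumes "t \<in> carrier (alt_group 5)" "t \<circ> t = id"
  shows "\<exists>a \<in> carrier (alt_group 5). a \<circ> (a \<circ> a) = id \<and>
          (a \<circ> (a \<circ> t)) \<circ> ((a \<circ> (a \<circ> t)) \<circ> (a \<circ> (a \<circ> t))) = id"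
proof -
  have tA: "t \<in> set A5L" using assms(1) by (simp add: car_A5)
  hence T: "t permutes {1..5}" by (rule perm5)
  have "cmp (ls t) (ls t) = I5" using assms T by (simp add: id_iff ls_comp ls_compS pc pcS)
  then obtain l where l: "l \<in> set LL" "cmp l (cmp l l) = I5"
     "cmp (cmp l (cmp l (ls t))) (cmp (cmp l (cmp l (ls t))) (cmp l (cmp l (ls t)))) = I5"
    using K4 lsLL[OF tA] by blast
  obtain a where a: "a \<in> set A5L" "l = ls a" using l(1) by (auto simp: LL_def)
  have A: "a permutes {1..5}" using a(1) by (rule perm5)
  show ?thesis
    apply (rule bexI[of _ a])
    using l a A T by (simp_all add: id_iff ls_comp ls_compS pc pcS car_A5)
qed


lemma perm_funpow: "g permutes V \<Longrightarrow> (g ^^ n) permutes V"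
  by (induction n) (simp_all add: permutes_id permutes_compose)

lemma fp_mod: "g ^^ p = id \<Longrightarrow> g ^^ m = g ^^ (m mod p)"
proof -
  assume a: "g ^^ p = id"
  have e: "p * (m div p) + m mod p = m" by simp
  have "g ^^ m = g ^^ (p * (m div p) + m mod p)" by (simp only: e)
  also have "\<dots> = (g ^^ p) ^^ (m div p) \<circ> g ^^ (m mod p)" by (simp only: funpow_add funpow_mult)
  also have "\<dots> = g ^^ (m mod p)" using a by (simp add: id_funpow)
  finally show ?thesis .
qed

lemma prime_pow_id:
  assumes "p = 2 \<or> p = 3 \<or> p = 5" "g ^^ p = id" "0 < d" "d < p" "g ^^ d = id"
  shows "g = id"
proof -
  have cases: "(p = 2 \<and> d = 1) \<or> (p = 3 \<and> d = 1) \<or> (p = 3 \<and> d = 2) \<or> (p = 5 \<and> d = 1) \<or>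
     (p = 5 \<and> d = 2) \<or> (p = 5 \<and> d = 3) \<or> (p = 5 \<and> d = 4)" using assms(1,3,4) by auto
  have "\<exists>x y. d * x = p * y + 1"
    using cases
    apply (elim disjE conjE)
          apply (rule exI[of _ 1], rule exI[of _ 0], simp)
         apply (rule exI[of _ 1], rule exI[of _ 0], simp)
        apply (rule exI[of _ 2], rule exI[of _ 1], simp)
       apply (rule exI[of _ 1], rule exI[of _ 0], simp)
      apply (rule exI[of _ 3], rule exI[of _ 1], simp)
     apply (rule exI[of _ 2], rule exI[of _ 1], simp)
    apply (rule exI[of _ 4], rule exI[of _ 3], simp)
    done
  then obtain x y where xy: "d * x = p * y + 1" by blast
  have "g ^^ (d * x) = id" using assms(5) by (simp add: funpow_mult[symmetric] id_funpow)
  moreover have "g ^^ (d * x) = g" unfolding xy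
    using assms(2) by (simp add: funpow_add funpow_mult[symmetric] id_funpow)
  ultimately show ?thesis by simp
qed

lemma funpow_comp_id_fix: "g x = x \<Longrightarrow> (g ^^ n) x = x"
  by (induction n) auto

definition Pw :: "('a \<Rightarrow> 'a) \<Rightarrow> nat \<Rightarrow> ('a \<Rightarrow> 'a) set" where
  "Pw g p = (\<lambda>k. g ^^ k) ` {..<p}"

lemma Pw_pgroup:
  assumes "g permutes V" "g ^^ p = id" "0 < p"
  shows "is_pgroup V (Pw g p)"
  unfolding is_pgroup_def
proof (intro conjI ballI)
  fix h assume "h \<in> Pw g p"
  then obtain i where i: "i < p" "h = g ^^ i" by (auto simp: Pw_def)
  show "h permutes V" using i perm_funpow[OF assms(1)] by simp
  have "g ^^ i \<circ> g ^^ (p - i) = id" "g ^^ (p - i) \<circ> g ^^ i = id"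
    using assms(2) i(1) by (simp_all add: funpow_add[symmetric])
  hence "Hilbert_Choice.inv h = g ^^ (p - i)" using i(2) inv_unique_comp by blast
  also have "\<dots> = g ^^ ((p - i) mod p)" using fp_mod[OF assms(2)] by blast
  finally show "Hilbert_Choice.inv h \<in> Pw g p" unfolding Pw_def using assms(3) by simp
next
  show "id \<in> Pw g p" unfolding Pw_def using assms(3) by (intro image_eqI[of _ _ 0]) auto
next
  fix h h' assume "h \<in> Pw g p" "h' \<in> Pw g p"
  then obtain i j where "h = g ^^ i" "h' = g ^^ j" by (auto simp: Pw_def)
  hence "h \<circ> h' = g ^^ ((i + j) mod p)" using fp_mod[OF assms(2)] by (simp add: funpow_add[symmetric])
  thus "h \<circ> h' \<in> Pw g p" unfolding Pw_def using assms(3) by simp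
qed

lemma Pw_card:
  assumes "p = 2 \<or> p = 3 \<or> p = 5" "g ^^ p = id" "g \<noteq> id"
  shows "card (Pw g p) = p"
proof -
  have "inj_on (\<lambda>k. g ^^ k) {..<p}"
  proof (rule inj_onI, rule ccontr)
    fix i j assume ij: "i \<in> {..<p}" "j \<in> {..<p}" "g ^^ i = g ^^ j" "i \<noteq> j"
    have key: "g ^^ (b - a) = id" if "a < b" "b < p" "g ^^ a = g ^^ b" for a b
    proof -
      have "g ^^ (p - b) \<circ> g ^^ b = id" using assms(2) that by (simp add: funpow_add[symmetric])
      hence "g ^^ (p - b) \<circ> g ^^ a = id" using that by simp
      hence e: "g ^^ (p - b + a) = id" by (simp add: funpow_add)
      have "g ^^ (b - a) = g ^^ (b - a) \<circ> g ^^ (p - b + a)" using e by simp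
      also have "\<dots> = g ^^ p" using that by (simp add: funpow_add[symmetric])
      finally show ?thesis using assms(2) by simp
    qed
    show False
    proof (cases "i < j")
      case True
      have "g ^^ (j - i) = id" using key[of i j] ij True by simp
      moreover have "0 < j - i" "j - i < p" using True ij by auto
      ultimately show False using prime_pow_id[OF assms(1,2), of "j - i"] assms(3) by blast
    next
      case False
      hence "j < i" using ij(4) by simp
      have "g ^^ (i - j) = id" using key[of j i] ij \<open>j < i\<close> by simp
      moreover have "0 < i - j" "i - j < p" using \<open>j < i\<close> ij by auto
      ultimately show False using prime_pow_id[OF assms(1,2), of "i - j"] assms(3) by blast
    qed
  qed
  thus ?thesis unfolding Pw_def by (simp add: card_image)
qed

lemma Pw_fix:
  assumes "g ^^ p = id" "1 < p"
  shows "FixH V (Pw g p) = Fx V g"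
proof
  show "FixH V (Pw g p) \<subseteq> Fx V g"
  proof
    fix x assume "x \<in> FixH V (Pw g p)"
    moreover have "g \<in> Pw g p" unfolding Pw_def using assms(2) by (intro image_eqI[of _ _ 1]) auto
    ultimately show "x \<in> Fx V g" by (auto simp: FixH_def Fx_def)
  qed
  show "Fx V g \<subseteq> FixH V (Pw g p)"
    by (auto simp: FixH_def Fx_def Pw_def funpow_comp_id_fix)
qed

lemma small_div:
  assumes "(p::nat) = 2 \<or> p = 3 \<or> p = 5" "d dvd p"
  shows "d = 1 \<or> d = p"
proof -
  have "0 < p" using assms(1) by auto
  hence "d \<le> p" "0 < d" using assms(2) by (auto dest: dvd_imp_le intro!: Nat.gr0I)
  hence "d \<in> {1,2,3,4,5}" using assms(1) by auto
  thus ?thesis using assms by (auto simp: dvd_eq_mod_eq_0)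
qed

lemma prime_grp:
  assumes "is_pgroup V H" "finite V" "finite H" "card H = 2 \<or> card H = 3 \<or> card H = 5"
  shows "card H dvd card (V - FixH V H)"
proof (rule dvd_nonfixed[OF assms(1,2)])
  fix x assume x: "x \<in> V - FixH V H"
  have xo: "x \<in> Orb H x" by (rule Orb_self[OF assms(1)])
  have "card (Orb H x) * card (Stb H x) = card H" using orbit_stab[OF assms(1,3)] x by blast
  hence "card (Orb H x) dvd card H" by (metis dvd_triv_left)
  moreover note small_div[OF assms(4)]
  ultimately have "card (Orb H x) = 1 \<or> card (Orb H x) = card H" by blast
  moreover have "card (Orb H x) \<noteq> 1"
  proof
    assume "card (Orb H x) = 1"
    then obtain y where y: "Orb H x = {y}" by (auto simp: card_Suc_eq)
    hence "Orb H x = {x}" using xo by simp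
    thus False using FixH_Orb[OF assms(1)] x by blast
  qed
  ultimately show "card H dvd card (Orb H x)" by simp
qed

lemma prime_elem:
  assumes "g permutes V" "finite V" "p = 2 \<or> p = 3 \<or> p = 5" "g ^^ p = id" "g \<noteq> id"
  shows "p dvd card (V - Fx V g)"
proof -
  have p1: "1 < p" using assms(3) by auto
  have pg: "is_pgroup V (Pw g p)" using Pw_pgroup[OF assms(1,4)] p1 by simp
  have c: "card (Pw g p) = p" by (rule Pw_card[OF assms(3,4,5)])
  have "finite (Pw g p)" unfolding Pw_def by simp
  from prime_grp[OF pg assms(2) this] show ?thesis using c Pw_fix[OF assms(4) p1] assms(3) by simp
qed

lemma Fx_lt:
  assumes "g permutes V" "finite V" "g \<noteq> id"
  shows "card (Fx V g) < card V"
proof -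
  have "Fx V g \<noteq> V"
  proof
    assume "Fx V g = V"
    hence "g x = x" for x using assms(1) by (cases "x \<in> V") (auto simp: Fx_def permutes_not_in)
    thus False using assms(3) by auto
  qed
  moreover have "Fx V g \<subseteq> V" by (auto simp: Fx_def)
  ultimately show ?thesis using assms(2) by (meson psubsetI psubset_card_mono)
qed


lemma invol_parity:
  assumes "finite V" "t permutes V" "t \<circ> t = id" "card {x. t x \<noteq> x} = n"
  shows "even n \<and> (evenperm t \<longleftrightarrow> even (n div 2))"
  using assms
proof (induction n arbitrary: t rule: less_induct)
  case (less n)
  have MV: "{x. t x \<noteq> x} \<subseteq> V" using less.prems(2) by (auto dest: permutes_not_in)
  show ?case
  proof (cases "n = 0")
    case True
    hence "{x. t x \<noteq> x} = {}" using less.prems(4) finite_subset[OF MV less.prems(1)] by simp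
    hence "\<forall>x. t x = x" by blast
    hence "t = id" by (simp add: fun_eq_iff)
    thus ?thesis using True by simp
  next
    case False
    hence "{x. t x \<noteq> x} \<noteq> {}" using less.prems(4) by (metis card.empty)
    then obtain x where x: "t x \<noteq> x" by blast
    define y where "y = t x"
    have ty: "t y = x" using less.prems(3) unfolding y_def by (metis comp_apply id_apply)
    have xy: "x \<noteq> y" using x y_def by simp
    have xV: "x \<in> V" "y \<in> V" using MV x ty xy by auto
    define t' where "t' = transpose x y \<circ> t"
    have t'z: "t' z = (if z = x \<or> z = y then z else t z)" for z
    proof -
      have "t z \<noteq> x" if "z \<noteq> y" using that ty less.prems(3) by (metis comp_apply id_apply)
      moreover have "t z \<noteq> y" if "z \<noteq> x" using that y_def less.prems(3) by (metis comp_apply id_apply)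
      ultimately show ?thesis unfolding t'_def using ty y_def by (auto simp: transpose_def)
    qed
    have M': "{z. t' z \<noteq> z} = {z. t z \<noteq> z} - {x, y}" using t'z by auto
    have xyM: "{x, y} \<subseteq> {z. t z \<noteq> z}" using x ty xy by auto
    have finM: "finite {z. t z \<noteq> z}" using finite_subset[OF MV less.prems(1)] .
    have c': "card {z. t' z \<noteq> z} = n - 2" unfolding M' using xyM finM less.prems(4) xy
      by (simp add: card_Diff_subset)
    have n2: "2 \<le> n" using less.prems(4) card_mono[OF finM xyM] xy by simp
    have t'p: "t' permutes V" unfolding t'_def using xV less.prems(2) by (simp add: permutes_compose permutes_swap_id)
    have t't': "t' \<circ> t' = id"
    proof
      fix z show "(t' \<circ> t') z = id z"
        using t'z[of z] t'z[of "t z"] less.prems(3) ty y_def by (auto simp: fun_eq_iff) (metis comp_apply id_apply)+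
    qed
    have IH: "even (n - 2) \<and> (evenperm t' \<longleftrightarrow> even ((n - 2) div 2))"
      using less.IH[of "n - 2" t'] n2 less.prems(1) t'p t't' c' by simp
    have "t = transpose x y \<circ> t'" unfolding t'_def by (simp add: fun_eq_iff)
    hence "evenperm t \<longleftrightarrow> (evenperm (transpose x y) = evenperm t')"
      using evenperm_comp[OF permutation_swap_id permutes_imp_permutation[OF less.prems(1) t'p]] by simp
    hence "evenperm t \<longleftrightarrow> \<not> evenperm t'" using xy by (simp add: evenperm_swap)
    moreover have "even (n - 2)" using IH by blast
    moreover then obtain k where k: "n - 2 = 2 * k" by (rule evenE)
    moreover have n: "n = 2 * k + 2" using k n2 by simp
    ultimately show ?thesis using IH by simp
  qed
qed

lemma auts_pgroup:
  assumes "simple_graph V E" shows "is_pgroup V (graph_auts V E)"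
  unfolding is_pgroup_def
proof (intro conjI ballI)
  fix h assume h: "h \<in> graph_auts V E"
  thus "h permutes V" by (simp add: graph_auts_def)
  have hp: "h permutes V" using h by (simp add: graph_auts_def)
  have "E (Hilbert_Choice.inv h u) (Hilbert_Choice.inv h w) \<longleftrightarrow> E u w" if "u \<in> V" "w \<in> V" for u w
  proof -
    have "Hilbert_Choice.inv h u \<in> V" "Hilbert_Choice.inv h w \<in> V"
      using that permutes_in_image[OF permutes_inv[OF hp]] by auto
    hence "E (h (Hilbert_Choice.inv h u)) (h (Hilbert_Choice.inv h w)) \<longleftrightarrow> E (Hilbert_Choice.inv h u) (Hilbert_Choice.inv h w)"
      using h by (simp add: graph_auts_def)
    thus ?thesis by (simp add: permutes_inverses(1)[OF hp])
  qed
  thus "Hilbert_Choice.inv h \<in> graph_auts V E"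
    by (simp add: graph_auts_def permutes_inv[OF hp])
next
  show "id \<in> graph_auts V E" by (simp add: graph_auts_def permutes_id)
next
  fix g h assume g: "g \<in> graph_auts V E" and h: "h \<in> graph_auts V E"
  have hp: "h permutes V" using h by (simp add: graph_auts_def)
  show "g \<circ> h \<in> graph_auts V E"
    using g h permutes_in_image[OF hp] by (simp add: graph_auts_def permutes_compose)
qed

lemma auts_finite: "finite V \<Longrightarrow> finite (graph_auts V E)"
  by (rule finite_subset[of _ "{p. p permutes V}"]) (auto simp: graph_auts_def finite_permutations)

lemma auts_all:
  assumes "simple_graph V E" "\<And>u w. u \<in> V \<Longrightarrow> w \<in> V \<Longrightarrow> E u w \<longleftrightarrow> (c \<and> u \<noteq> w)"
  shows "graph_auts V E = {p. p permutes V}"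
proof
  show "graph_auts V E \<subseteq> {p. p permutes V}" by (auto simp: graph_auts_def)
  show "{p. p permutes V} \<subseteq> graph_auts V E"
  proof
    fix p assume "p \<in> {p. p permutes V}"
    hence p: "p permutes V" by simp
    have "E (p u) (p w) \<longleftrightarrow> E u w" if "u \<in> V" "w \<in> V" for u w
    proof -
      have "p u \<in> V" "p w \<in> V" using that p by (auto simp: permutes_in_image)
      moreover have "p u = p w \<longleftrightarrow> u = w" using p by (metis permutes_inj injD)
      ultimately show ?thesis using assms(2) that by simp
    qed
    thus "p \<in> graph_auts V E" using p by (simp add: graph_auts_def)
  qed
qed


lemma cardA: "card (carrier (alt_group 5)) = 60"
proof -
  have "length A5L = 60" by (simp add: A5L_def)
  thus ?thesis using distinct_card[OF A5L_dist] car_A5 by simp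
qed

lemma perm_idem: "p permutes S \<Longrightarrow> p \<circ> p = p \<Longrightarrow> p = id"
proof -
  assume p: "p permutes S" and pp: "p \<circ> p = p"
  have "inj p" using p by (rule permutes_inj)
  show "p = id"
  proof
    fix x have "p (p x) = p x" using pp by (metis comp_apply)
    thus "p x = id x" using \<open>inj p\<close> by (simp add: inj_eq)
  qed
qed

locale A5g =
  fixes V :: "'a set" and E :: "'a \<Rightarrow> 'a \<Rightarrow> bool"
  assumes fin: "finite V" and sg: "simple_graph V E" and vt: "vertex_transitive V E"
    and iso: "Aut V E \<cong> alt_group 5"
begin

abbreviation "G \<equiv> graph_auts V E"
abbreviation "A \<equiv> carrier (alt_group 5)"

lemma pg: "is_pgroup V G" by (rule auts_pgroup[OF sg])
lemma finG: "finite G" by (rule auts_finite[OF fin])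

definition f where "f = (SOME f. f \<in> iso (Aut V E) (alt_group 5))"

lemma f_iso: "f \<in> iso (Aut V E) (alt_group 5)"
  using iso unfolding is_iso_def f_def by (metis ex_in_conv someI_ex)

lemma carAut: "carrier (Aut V E) = G" by (simp add: Aut_def)

lemma fbij: "bij_betw f G A" using f_iso by (simp add: iso_def carAut)

lemma fmul: "x \<in> G \<Longrightarrow> y \<in> G \<Longrightarrow> f (x \<circ> y) = f x \<circ> f y"
  using f_iso by (simp add: iso_def hom_def Aut_def alt_group_mult)

lemma fA: "x \<in> G \<Longrightarrow> f x \<in> A" using fbij by (auto simp: bij_betw_def)

lemma fperm: "x \<in> G \<Longrightarrow> f x permutes {1..5}" using fA by (simp add: alt_group_carrier)

lemma gc: "x \<in> G \<Longrightarrow> y \<in> G \<Longrightarrow> x \<circ> y \<in> G" using pg by (rule pg_comp)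
lemma gid: "id \<in> G" using pg by (rule pg_id)
lemma ginv: "x \<in> G \<Longrightarrow> Hilbert_Choice.inv x \<in> G" using pg by (rule pg_inv)
lemma gperm: "x \<in> G \<Longrightarrow> x permutes V" using pg by (rule pg_perm)

lemma fid: "f id = id"
proof -
  have "f id = f id \<circ> f id" using fmul[OF gid gid] by simp
  thus ?thesis using perm_idem[OF fperm[OF gid]] by simp
qed

lemma finj: "x \<in> G \<Longrightarrow> y \<in> G \<Longrightarrow> f x = f y \<longleftrightarrow> x = y"
  using fbij by (auto simp: bij_betw_def inj_on_def)

lemma f_id_iff: "x \<in> G \<Longrightarrow> f x = id \<longleftrightarrow> x = id"
  using finj[OF _ gid] fid by simp

lemma cardG: "card G = 60"
proof -
  have "card G = card A" by (rule bij_betw_same_card[OF fbij])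
  thus ?thesis using cardA by (rule trans)
qed

lemma transfer_card:
  assumes "\<And>g. g \<in> G \<Longrightarrow> Q g \<longleftrightarrow> R (f g)"
  shows "card {g \<in> G. Q g} = card {p \<in> A. R p}"
proof -
  have "f ` {g \<in> G. Q g} = {p \<in> A. R p}"
  proof
    show "f ` {g \<in> G. Q g} \<subseteq> {p \<in> A. R p}" using assms fA by auto
    show "{p \<in> A. R p} \<subseteq> f ` {g \<in> G. Q g}"
    proof
      fix p assume p: "p \<in> {p \<in> A. R p}"
      then obtain g where g: "g \<in> G" "p = f g" using fbij by (auto simp: bij_betw_def)
      thus "p \<in> f ` {g \<in> G. Q g}" using p assms by auto
    qed
  qed
  moreover have "inj_on f {g \<in> G. Q g}" using fbij by (auto simp: bij_betw_def inj_on_def)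
  hence "card (f ` {g \<in> G. Q g}) = card {g \<in> G. Q g}" by (rule card_image)
  ultimately show ?thesis by simp
qed

lemma f2: "g \<in> G \<Longrightarrow> f (g \<circ> g) = f g \<circ> f g" by (simp add: fmul)
lemma f3: "g \<in> G \<Longrightarrow> f (g \<circ> (g \<circ> g)) = f g \<circ> (f g \<circ> f g)" by (simp add: fmul gc)
lemma f5: "g \<in> G \<Longrightarrow> f (g \<circ> (g \<circ> (g \<circ> (g \<circ> g)))) = f g \<circ> (f g \<circ> (f g \<circ> (f g \<circ> f g)))"
  by (simp add: fmul gc)

lemma g2: assumes g: "g \<in> G" shows "g \<circ> g = id \<longleftrightarrow> f g \<circ> f g = id"
proof -
  have "g \<circ> g = id \<longleftrightarrow> f (g \<circ> g) = id" using f_id_iff[OF gc[OF g g]] by simp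
  thus ?thesis using f2[OF g] by simp
qed
lemma g3: assumes g: "g \<in> G" shows "g \<circ> (g \<circ> g) = id \<longleftrightarrow> f g \<circ> (f g \<circ> f g) = id"
proof -
  have "g \<circ> (g \<circ> g) = id \<longleftrightarrow> f (g \<circ> (g \<circ> g)) = id" using f_id_iff[OF gc[OF g gc[OF g g]]] by simp
  thus ?thesis using f3[OF g] by simp
qed
lemma g5: assumes g: "g \<in> G" shows "g \<circ> (g \<circ> (g \<circ> (g \<circ> g))) = id \<longleftrightarrow> f g \<circ> (f g \<circ> (f g \<circ> (f g \<circ> f g))) = id"
proof -
  have "g \<circ> (g \<circ> (g \<circ> (g \<circ> g))) = id \<longleftrightarrow> f (g \<circ> (g \<circ> (g \<circ> (g \<circ> g)))) = id"
    using f_id_iff[OF gc[OF g gc[OF g gc[OF g gc[OF g g]]]]] by simp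
  thus ?thesis using f5[OF g] by simp
qed

lemma G1: "g \<in> G \<Longrightarrow> g = id \<or> g \<circ> g = id \<or> g \<circ> (g \<circ> g) = id \<or> g \<circ> (g \<circ> (g \<circ> (g \<circ> g))) = id"
proof -
  assume g: "g \<in> G"
  show ?thesis using F1[OF fA[OF g]] f_id_iff[OF g] g2[OF g] g3[OF g] g5[OF g] by simp
qed

definition "C2 = {g \<in> G. g \<noteq> id \<and> g \<circ> g = id}"
definition "C3 = {g \<in> G. g \<noteq> id \<and> g \<circ> (g \<circ> g) = id}"
definition "C5 = {g \<in> G. g \<noteq> id \<and> g \<circ> (g \<circ> (g \<circ> (g \<circ> g))) = id}"

lemma cardC: "card C2 = 15" "card C3 = 20" "card C5 = 24"
proof -
  have "card C2 = card {p \<in> A. p \<noteq> id \<and> p \<circ> p = id}" unfolding C2_def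
    by (rule transfer_card) (use f_id_iff g2 in blast)
  thus "card C2 = 15" using F2(1) by simp
  have "card C3 = card {p \<in> A. p \<noteq> id \<and> p \<circ> (p \<circ> p) = id}" unfolding C3_def
    by (rule transfer_card) (use f_id_iff g3 in blast)
  thus "card C3 = 20" using F2(2) by simp
  have "card C5 = card {p \<in> A. p \<noteq> id \<and> p \<circ> (p \<circ> (p \<circ> (p \<circ> p))) = id}" unfolding C5_def
    by (rule transfer_card) (use f_id_iff g5 in blast)
  thus "card C5 = 24" using F2(3) by simp
qed

lemma G3:
  assumes "t \<in> G" "t \<noteq> id" "t \<circ> t = id"
  shows "card {g \<in> G. g \<circ> t = t \<circ> g} = 4"
proof -
  have "card {g \<in> G. g \<circ> t = t \<circ> g} = card {p \<in> A. p \<circ> f t = f t \<circ> p}"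
  proof (rule transfer_card)
    fix g assume g: "g \<in> G"
    have "g \<circ> t = t \<circ> g \<longleftrightarrow> f (g \<circ> t) = f (t \<circ> g)" using finj gc g assms(1) by metis
    thus "g \<circ> t = t \<circ> g \<longleftrightarrow> f g \<circ> f t = f t \<circ> f g" using fmul g assms(1) by simp
  qed
  moreover have "f t \<noteq> id" "f t \<circ> f t = id" using assms f_id_iff g2 by auto
  ultimately show ?thesis using F3[OF fA[OF assms(1)]] by simp
qed

lemma G4:
  assumes "t \<in> G" "t \<circ> t = id"
  shows "\<exists>a \<in> G. a \<circ> (a \<circ> a) = id \<and> (a \<circ> (a \<circ> t)) \<circ> ((a \<circ> (a \<circ> t)) \<circ> (a \<circ> (a \<circ> t))) = id"
proof -
  have "f t \<circ> f t = id" using assms g2 by blast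
  then obtain a' where a': "a' \<in> A" "a' \<circ> (a' \<circ> a') = id"
     "(a' \<circ> (a' \<circ> f t)) \<circ> ((a' \<circ> (a' \<circ> f t)) \<circ> (a' \<circ> (a' \<circ> f t))) = id"
    using F4[OF fA[OF assms(1)]] by blast
  obtain a where a: "a \<in> G" "a' = f a" using a'(1) fbij by (auto simp: bij_betw_def)
  define b where "b = a \<circ> (a \<circ> t)"
  have bG: "b \<in> G" unfolding b_def using a assms by (simp add: gc)
  have fb: "f b = a' \<circ> (a' \<circ> f t)" unfolding b_def using a assms by (simp add: fmul gc)
  have "a \<circ> (a \<circ> a) = id" using g3[OF a(1)] a a' by simp
  moreover have "b \<circ> (b \<circ> b) = id" using g3[OF bG] fb a' by simp
  ultimately show ?thesis using a(1) b_def by blast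
qed

lemma perm3: "permutation g \<Longrightarrow> g \<circ> (g \<circ> g) = id \<Longrightarrow> evenperm g"
proof -
  assume p: "permutation g" and g: "g \<circ> (g \<circ> g) = id"
  have "evenperm (g \<circ> (g \<circ> g)) = (evenperm g = (evenperm g = evenperm g))"
    using p by (simp add: evenperm_comp permutation_compose)
  thus ?thesis using g by simp
qed

lemma perm5: "permutation g \<Longrightarrow> g \<circ> (g \<circ> (g \<circ> (g \<circ> g))) = id \<Longrightarrow> evenperm g"
proof -
  assume p: "permutation g" and g: "g \<circ> (g \<circ> (g \<circ> (g \<circ> g))) = id"
  have "evenperm (g \<circ> (g \<circ> (g \<circ> (g \<circ> g)))) = evenperm g"
    using p by (simp add: evenperm_comp permutation_compose)
  thus ?thesis using g by simp
qed

lemma gpermutation: "g \<in> G \<Longrightarrow> permutation g"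
  using permutes_imp_permutation[OF fin gperm] .

lemma G_even: "g \<in> G \<Longrightarrow> evenperm g"
proof -
  assume g: "g \<in> G"
  have c: "g = id \<or> g \<circ> g = id \<or> g \<circ> (g \<circ> g) = id \<or> g \<circ> (g \<circ> (g \<circ> (g \<circ> g))) = id" by (rule G1[OF g])
  show "evenperm g"
  proof (cases "g \<circ> g = id")
    case True
    then obtain a where a: "a \<in> G" "a \<circ> (a \<circ> a) = id" "(a \<circ> (a \<circ> g)) \<circ> ((a \<circ> (a \<circ> g)) \<circ> (a \<circ> (a \<circ> g))) = id"
      using G4[OF g] by blast
    have bG: "a \<circ> (a \<circ> g) \<in> G" using a g by (simp add: gc)
    have ea: "evenperm a" using perm3[OF gpermutation[OF a(1)] a(2)] .
    have eb: "evenperm (a \<circ> (a \<circ> g))" using perm3[OF gpermutation[OF bG] a(3)] .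
    have "a \<circ> (a \<circ> (a \<circ> g)) = (a \<circ> (a \<circ> a)) \<circ> g" by (simp add: o_assoc)
    hence "a \<circ> (a \<circ> (a \<circ> g)) = g" using a(2) by simp
    moreover have "evenperm (a \<circ> (a \<circ> (a \<circ> g)))"
      using ea eb gpermutation[OF a(1)] gpermutation[OF bG] by (simp add: evenperm_comp)
    ultimately show ?thesis by simp
  next
    case False
    thus ?thesis using c perm3 perm5 gpermutation[OF g] by auto
  qed
qed

end


context A5g
begin

lemma Orb_G: assumes v: "v \<in> V" shows "Orb G v = V"
proof
  show "Orb G v \<subseteq> V" by (rule Orb_sub[OF pg v])
  show "V \<subseteq> Orb G v"
  proof
    fix u assume u: "u \<in> V"
    then obtain g where "g \<in> G" "g v = u" using vt v by (auto simp: vertex_transitive_def)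
    thus "u \<in> Orb G v" unfolding Orb_def by (intro image_eqI[of u _ g]) auto
  qed
qed

lemma stab_card: assumes v: "v \<in> V" shows "card V * card (Stb G v) = 60"
  using orbit_stab[OF pg finG v] Orb_G[OF v] cardG by simp

lemma Stb_sub: "Stb G v \<subseteq> G" by (auto simp: Stb_def)
lemma finStb: "finite (Stb G v)" using finite_subset[OF Stb_sub finG] .

lemma Stb_pg: assumes v: "v \<in> V" shows "is_pgroup V (Stb G v)"
  unfolding is_pgroup_def
proof (intro conjI ballI)
  fix h assume h: "h \<in> Stb G v"
  hence hG: "h \<in> G" and hv: "h v = v" by (auto simp: Stb_def)
  show "h permutes V" using gperm[OF hG] .
  have "Hilbert_Choice.inv h v = v" using permutes_inverses(2)[OF gperm[OF hG], of v] hv by simp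
  thus "Hilbert_Choice.inv h \<in> Stb G v" using ginv[OF hG] by (simp add: Stb_def)
next
  show "id \<in> Stb G v" using gid by (simp add: Stb_def)
next
  fix g h assume "g \<in> Stb G v" "h \<in> Stb G v"
  thus "g \<circ> h \<in> Stb G v" using gc by (auto simp: Stb_def)
qed

lemma V_ne: "V \<noteq> {}"
proof
  assume "V = {}"
  hence "G \<subseteq> {id}" by (auto simp: graph_auts_def)
  hence "card G \<le> card {id::'a\<Rightarrow>'a}" by (rule card_mono[rotated]) simp
  hence "card G \<le> 1" by simp
  thus False using cardG by simp
qed

lemma cardV_ge: "5 \<le> card V"
proof (rule ccontr)
  assume "\<not> 5 \<le> card V"
  hence n: "card V \<le> 4" by simp
  have "G \<subseteq> {p. p permutes V}" by (auto simp: graph_auts_def)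
  hence "card G \<le> card {p. p permutes V}" by (rule card_mono[OF finite_permutations[OF fin]])
  also have "\<dots> = fact (card V)" by (rule card_permutations[OF refl fin])
  also have "\<dots> \<le> fact 4" using n by (rule fact_mono)
  finally show False using cardG by (simp add: fact_numeral)
qed

lemma div60: "(d::nat) dvd 60 \<Longrightarrow> d \<in> {1,2,3,4,5,6,10,12,15,20,30,60}"
proof -
  assume d: "d dvd 60"
  have "d \<noteq> 0" using d by (rule_tac ccontr) simp
  moreover have "d \<le> 60" using d by (rule dvd_imp_le) simp
  ultimately have "d \<in> set [1..<61]" by simp
  hence "d \<in> set (filter (\<lambda>d. d dvd 60) [1..<61])" using d by simp
  also have "filter (\<lambda>d. d dvd (60::nat)) [1..<61] = [1,2,3,4,5,6,10,12,15,20,30,60]" by code_simp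
  finally show ?thesis by simp
qed

lemma n_cases: assumes v: "v \<in> V" shows "card V \<in> {5,6,10,12,15,20,30,60}"
proof -
  have "card V dvd 60" using stab_card[OF v] by (metis dvd_triv_left)
  hence "card V \<in> {1,2,3,4,5,6,10,12,15,20,30,60}" by (rule div60)
  thus ?thesis using cardV_ge by auto
qed

lemma stabs_eq_card: "v \<in> V \<Longrightarrow> w \<in> V \<Longrightarrow> card (Stb G v) = card (Stb G w)"
proof -
  assume v: "v \<in> V" and w: "w \<in> V"
  have "card V > 0" using V_ne fin by (simp add: card_gt_0_iff)
  thus ?thesis using stab_card[OF v] stab_card[OF w] by (metis mult_left_cancel neq0_conv)
qed

lemma burnG: "(\<Sum>g\<in>G. card (Fx V g)) = 60"
proof -
  obtain v where v: "v \<in> V" using V_ne by blast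
  have "{Orb G x | x. x \<in> V} = {V}" using Orb_G V_ne by auto
  thus ?thesis using burnside'[OF pg finG fin] cardG by simp
qed

lemma C_sub: "C2 \<subseteq> G" "C3 \<subseteq> G" "C5 \<subseteq> G" by (auto simp: C2_def C3_def C5_def)

lemma sum_split:
  assumes S: "S \<subseteq> G"
  shows "(\<Sum>g\<in>S. \<phi> g) = (\<Sum>g\<in>S \<inter> {id}. \<phi> g) + (\<Sum>g\<in>S \<inter> C2. \<phi> g) + (\<Sum>g\<in>S \<inter> C3. \<phi> g) + (\<Sum>g\<in>S \<inter> C5. \<phi> g)"
proof -
  have fS: "finite S" using finite_subset[OF S finG] .
  have cover: "S = (S \<inter> {id}) \<union> (S \<inter> C2) \<union> (S \<inter> C3) \<union> (S \<inter> C5)"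
  proof
    show "S \<subseteq> (S \<inter> {id}) \<union> (S \<inter> C2) \<union> (S \<inter> C3) \<union> (S \<inter> C5)"
    proof
      fix g assume g: "g \<in> S"
      hence "g \<in> G" using S by blast
      thus "g \<in> (S \<inter> {id}) \<union> (S \<inter> C2) \<union> (S \<inter> C3) \<union> (S \<inter> C5)"
        using G1 g by (auto simp: C2_def C3_def C5_def)
    qed
  qed blast
  have d23: "g \<notin> C2 \<or> g \<notin> C3" for g
  proof (rule ccontr)
    assume "\<not> (g \<notin> C2 \<or> g \<notin> C3)"
    hence "g \<circ> g = id" "g \<circ> (g \<circ> g) = id" "g \<noteq> id" by (auto simp: C2_def C3_def)
    thus False by simp
  qed
  have d25: "g \<notin> C2 \<or> g \<notin> C5" for g
  proof (rule ccontr)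
    assume "\<not> (g \<notin> C2 \<or> g \<notin> C5)"
    hence "g \<circ> g = id" "g \<circ> (g \<circ> (g \<circ> (g \<circ> g))) = id" "g \<noteq> id" by (auto simp: C2_def C5_def)
    thus False by (simp add: o_assoc[symmetric])
  qed
  have d35: "g \<notin> C3 \<or> g \<notin> C5" for g
  proof (rule ccontr)
    assume "\<not> (g \<notin> C3 \<or> g \<notin> C5)"
    hence a: "g \<circ> (g \<circ> g) = id" "g \<circ> (g \<circ> (g \<circ> (g \<circ> g))) = id" "g \<noteq> id" by (auto simp: C3_def C5_def)
    have "g \<circ> (g \<circ> (g \<circ> (g \<circ> g))) = (g \<circ> (g \<circ> g)) \<circ> (g \<circ> g)" by (simp add: o_assoc)
    hence "g \<circ> g = id" using a by simp
    thus False using a by simp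
  qed
  have "(\<Sum>g\<in>S. \<phi> g) = (\<Sum>g\<in>(S \<inter> {id}) \<union> (S \<inter> C2) \<union> (S \<inter> C3) \<union> (S \<inter> C5). \<phi> g)"
    using cover by simp
  also have "\<dots> = (\<Sum>g\<in>(S \<inter> {id}) \<union> (S \<inter> C2) \<union> (S \<inter> C3). \<phi> g) + (\<Sum>g\<in>S \<inter> C5. \<phi> g)"
    by (rule sum.union_disjoint) (use fS d25 d35 in \<open>auto simp: C5_def\<close>)
  also have "(\<Sum>g\<in>(S \<inter> {id}) \<union> (S \<inter> C2) \<union> (S \<inter> C3). \<phi> g) = (\<Sum>g\<in>(S \<inter> {id}) \<union> (S \<inter> C2). \<phi> g) + (\<Sum>g\<in>S \<inter> C3. \<phi> g)"
    by (rule sum.union_disjoint) (use fS d23 in \<open>auto simp: C3_def\<close>)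
  also have "(\<Sum>g\<in>(S \<inter> {id}) \<union> (S \<inter> C2). \<phi> g) = (\<Sum>g\<in>S \<inter> {id}. \<phi> g) + (\<Sum>g\<in>S \<inter> C2. \<phi> g)"
    by (rule sum.union_disjoint) (use fS in \<open>auto simp: C2_def\<close>)
  finally show ?thesis .
qed

lemma card_split:
  assumes S: "S \<subseteq> G"
  shows "card S = card (S \<inter> {id}) + card (S \<inter> C2) + card (S \<inter> C3) + card (S \<inter> C5)"
  using sum_split[OF S, of "\<lambda>_. 1::nat"] by simp

lemma pow3: "g ^^ 3 = g \<circ> (g \<circ> g)" by (simp add: numeral_3_eq_3)
lemma pow5: "g ^^ 5 = g \<circ> (g \<circ> (g \<circ> (g \<circ> g)))" by (simp add: numeral_eq_Suc)

lemma card_moved: "g \<in> G \<Longrightarrow> card {x. g x \<noteq> x} = card V - card (Fx V g)"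
proof -
  assume g: "g \<in> G"
  have "{x. g x \<noteq> x} = V - Fx V g" using gperm[OF g] by (auto simp: Fx_def dest: permutes_not_in)
  moreover have "Fx V g \<subseteq> V" by (auto simp: Fx_def)
  ultimately show ?thesis using fin by (simp add: card_Diff_subset finite_subset)
qed

lemma Fx_lt': "g \<in> G \<Longrightarrow> g \<noteq> id \<Longrightarrow> card (Fx V g) < card V"
  using Fx_lt[OF gperm fin] .

lemma FX2: assumes g: "g \<in> C2"
  shows "\<exists>m. card V - card (Fx V g) = 2 * m \<and> even m \<and> 0 < m"
proof -
  have gG: "g \<in> G" and gg: "g \<circ> g = id" and gi: "g \<noteq> id" using g by (auto simp: C2_def)
  have "even (card V - card (Fx V g)) \<and> (evenperm g \<longleftrightarrow> even ((card V - card (Fx V g)) div 2))"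
    using invol_parity[OF fin gperm[OF gG] gg card_moved[OF gG]] .
  moreover have "evenperm g" by (rule G_even[OF gG])
  moreover have "card (Fx V g) < card V" by (rule Fx_lt'[OF gG gi])
  ultimately have ev: "even (card V - card (Fx V g))" and pos: "0 < card V - card (Fx V g)"
    and ep: "even ((card V - card (Fx V g)) div 2)" by auto
  from ev obtain m where m: "card V - card (Fx V g) = 2 * m" by (rule evenE)
  have "0 < m" using m pos by simp
  moreover have "even m" using ep m by simp
  ultimately show ?thesis using m by blast
qed

lemma FX3: assumes g: "g \<in> C3"
  shows "3 dvd (card V - card (Fx V g)) \<and> card (Fx V g) < card V"
proof -
  have gG: "g \<in> G" and gg: "g \<circ> (g \<circ> g) = id" and gi: "g \<noteq> id" using g by (auto simp: C3_def)
  have "g ^^ 3 = id" using gg pow3[of g] by simp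
  hence "3 dvd card (V - Fx V g)" using prime_elem[OF gperm[OF gG] fin, of 3] gi by simp
  moreover have "Fx V g \<subseteq> V" by (auto simp: Fx_def)
  ultimately show ?thesis using Fx_lt'[OF gG gi] fin by (simp add: card_Diff_subset finite_subset)
qed

lemma FX5: assumes g: "g \<in> C5"
  shows "5 dvd (card V - card (Fx V g)) \<and> card (Fx V g) < card V"
proof -
  have gG: "g \<in> G" and gg: "g \<circ> (g \<circ> (g \<circ> (g \<circ> g))) = id" and gi: "g \<noteq> id" using g by (auto simp: C5_def)
  have "g ^^ 5 = id" using gg pow5[of g] by simp
  hence "5 dvd card (V - Fx V g)" using prime_elem[OF gperm[OF gG] fin, of 5] gi by simp
  moreover have "Fx V g \<subseteq> V" by (auto simp: Fx_def)
  ultimately show ?thesis using Fx_lt'[OF gG gi] fin by (simp add: card_Diff_subset finite_subset)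
qed

lemma stab_trans_all:
  assumes v: "v \<in> V" and tr: "\<And>w1 w2. w1 \<in> V - {v} \<Longrightarrow> w2 \<in> V - {v} \<Longrightarrow> \<exists>h\<in>Stb G v. h w1 = w2"
  shows False
proof -
  define c where "c = (\<exists>a\<in>V. \<exists>b\<in>V. E a b)"
  have irr: "\<not> E x x" for x using sg by (simp add: simple_graph_def)
  have key: "E u w \<longleftrightarrow> (c \<and> u \<noteq> w)" if u: "u \<in> V" and w: "w \<in> V" for u w
  proof
    assume "E u w" thus "c \<and> u \<noteq> w" using u w irr c_def by auto
  next
    assume cw: "c \<and> u \<noteq> w"
    then obtain a b where ab: "a \<in> V" "b \<in> V" "E a b" using c_def by blast
    have abn: "a \<noteq> b" using ab irr by auto
    obtain g1 where g1: "g1 \<in> G" "g1 a = v" using vt ab v by (auto simp: vertex_transitive_def)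
    obtain g2 where g2: "g2 \<in> G" "g2 u = v" using vt u v by (auto simp: vertex_transitive_def)
    have p1: "g1 permutes V" and p2: "g2 permutes V" using g1 g2 gperm by auto
    have "g1 b \<noteq> v" using g1 abn permutes_inj[OF p1] by (metis injD)
    moreover have "g1 b \<in> V" using ab p1 by (simp add: permutes_in_image)
    moreover have "g2 w \<noteq> v" using g2 cw permutes_inj[OF p2] by (metis injD)
    moreover have "g2 w \<in> V" using w p2 by (simp add: permutes_in_image)
    ultimately obtain h where h: "h \<in> Stb G v" "h (g1 b) = g2 w" using tr by blast
    have hG: "h \<in> G" and hv: "h v = v" using h by (auto simp: Stb_def)
    define k where "k = Hilbert_Choice.inv g2 \<circ> h \<circ> g1"
    have kG: "k \<in> G" unfolding k_def using hG g1 g2 by (simp add: gc ginv)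
    have "k a = u" unfolding k_def using g1 hv g2 permutes_inverses(2)[OF p2, of u] by simp
    moreover have "k b = w" unfolding k_def using h permutes_inverses(2)[OF p2, of w] by simp
    moreover have "E (k a) (k b) \<longleftrightarrow> E a b" using kG ab(1,2) by (simp add: graph_auts_def)
    ultimately show "E u w" using ab(3) by simp
  qed
  have "G = {p. p permutes V}" by (rule auts_all[OF sg key])
  hence "card G = fact (card V)" using card_permutations[OF refl fin] by simp
  moreover have "card V \<ge> 5" by (rule cardV_ge)
  hence "(fact 5 :: nat) \<le> fact (card V)" by (rule fact_mono)
  ultimately show False using cardG by (simp add: fact_numeral)
qed

end


context A5g
begin

lemma gpinv1: "g \<in> G \<Longrightarrow> g (Hilbert_Choice.inv g y) = y"
  using permutes_inverses(1)[OF gperm] .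
lemma gpinv2: "g \<in> G \<Longrightarrow> Hilbert_Choice.inv g (g y) = y"
  using permutes_inverses(2)[OF gperm] .

lemma gV: "g \<in> G \<Longrightarrow> x \<in> V \<Longrightarrow> g x \<in> V"
  using permutes_in_image[OF gperm] by blast

lemma fixblock:
  assumes v: "v \<in> V" and F2: "2 \<le> card (FixH V (Stb G v))" and nt: "Stb G v \<noteq> {id}"
  shows "imprimitive G V"
proof -
  define H where "H = Stb G v"
  define F where "F = FixH V H"
  have FV: "F \<subseteq> V" by (auto simp: F_def FixH_def)
  have stF: "Stb G x = H" if x: "x \<in> F" for x
  proof -
    have xV: "x \<in> V" using x FV by blast
    have "H \<subseteq> Stb G x" using x by (auto simp: H_def F_def FixH_def Stb_def)
    moreover have "card H = card (Stb G x)" unfolding H_def by (rule stabs_eq_card[OF v xV])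
    ultimately show ?thesis using card_subset_eq[OF finStb] by metis
  qed
  have sub: "g ` F \<subseteq> F" if g: "g \<in> G" and x: "x \<in> F" and gx: "g x \<in> F" for g x
  proof
    fix y assume "y \<in> g ` F"
    then obtain u where u: "u \<in> F" "y = g u" by blast
    have uV: "u \<in> V" using u FV by blast
    have "h (g u) = g u" if h: "h \<in> H" for h
    proof -
      have hS: "h \<in> Stb G (g x)" using stF[OF gx] h by simp
      hence hG: "h \<in> G" and hgx: "h (g x) = g x" by (auto simp: Stb_def)
      define k where "k = Hilbert_Choice.inv g \<circ> h \<circ> g"
      have kG: "k \<in> G" unfolding k_def using hG g by (simp add: gc ginv)
      have "k x = x" unfolding k_def using hgx gpinv2[OF g] by simp
      hence "k \<in> Stb G x" using kG by (simp add: Stb_def)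
      hence "k \<in> H" using stF[OF x] by simp
      hence "k u = u" using u by (auto simp: F_def FixH_def)
      hence "g (k u) = g u" by simp
      thus ?thesis unfolding k_def using gpinv1[OF g] by simp
    qed
    moreover have "g u \<in> V" using gV[OF g uV] .
    ultimately show "y \<in> F" using u by (auto simp: F_def FixH_def)
  qed
  have blk: "is_block G V F"
    unfolding is_block_def
  proof (intro conjI ballI)
    show "F \<subseteq> V" by (rule FV)
    fix g assume g: "g \<in> G"
    show "g ` F = F \<or> g ` F \<inter> F = {}"
    proof (cases "g ` F \<inter> F = {}")
      case False
      then obtain x where x: "x \<in> F" "g x \<in> F" by blast
      have s1: "g ` F \<subseteq> F" by (rule sub[OF g x])
      have gi: "Hilbert_Choice.inv g \<in> G" by (rule ginv[OF g])
      have "Hilbert_Choice.inv g (g x) = x" by (rule gpinv2[OF g])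
      hence s2: "Hilbert_Choice.inv g ` F \<subseteq> F" using sub[OF gi x(2)] x(1) by simp
      have "F \<subseteq> g ` F"
      proof
        fix u assume u: "u \<in> F"
        hence "Hilbert_Choice.inv g u \<in> F" using s2 by blast
        moreover have "u = g (Hilbert_Choice.inv g u)" using gpinv1[OF g] by simp
        ultimately show "u \<in> g ` F" by blast
      qed
      thus ?thesis using s1 by blast
    qed simp
  qed
  have "F \<noteq> V"
  proof
    assume FVe: "F = V"
    obtain h where h: "h \<in> H" "h \<noteq> id" using nt Stb_pg[OF v] pg_id unfolding H_def by blast
    have hG: "h \<in> G" using h by (auto simp: H_def Stb_def)
    have "h y = y" for y
    proof (cases "y \<in> V")
      case True thus ?thesis using FVe h by (auto simp: F_def FixH_def)
    next
      case False thus ?thesis using gperm[OF hG] by (simp add: permutes_not_in)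
    qed
    thus False using h by auto
  qed
  hence "card F < card V" using FV fin by (meson psubsetI psubset_card_mono)
  moreover have "1 < card F" using F2 by (simp add: F_def H_def)
  ultimately show ?thesis using blk by (auto simp: imprimitive_def)
qed

lemma v_FixH: "v \<in> V \<Longrightarrow> v \<in> FixH V (Stb G v)" by (simp add: FixH_def Stb_def)

lemma card_FixH_split: "v \<in> V \<Longrightarrow> card (FixH V (Stb G v)) + card (V - FixH V (Stb G v)) = card V"
proof -
  have "FixH V (Stb G v) \<subseteq> V" by (auto simp: FixH_def)
  thus ?thesis using fin by (metis card_Diff_subset finite_subset le_add_diff_inverse card_mono)
qed

lemma case_prime:
  assumes v: "v \<in> V" and p: "card (Stb G v) = 2 \<or> card (Stb G v) = 3 \<or> card (Stb G v) = 5"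
    and nd: "\<not> card (Stb G v) dvd (card V - 1)"
  shows "imprimitive G V"
proof -
  let ?H = "Stb G v" and ?F = "FixH V (Stb G v)"
  have d: "card ?H dvd card (V - ?F)" by (rule prime_grp[OF Stb_pg[OF v] fin finStb p])
  have s: "card ?F + card (V - ?F) = card V" by (rule card_FixH_split[OF v])
  have "?F \<noteq> {}" using v_FixH[OF v] by blast
  hence "card ?F \<noteq> 0" using fin by (simp add: FixH_def)
  moreover have "card ?F \<noteq> 1"
  proof
    assume "card ?F = 1"
    hence "card (V - ?F) = card V - 1" using s by simp
    thus False using d nd by simp
  qed
  ultimately have "2 \<le> card ?F" by simp
  moreover have "?H \<noteq> {id}" using p by auto
  ultimately show ?thesis by (rule fixblock[OF v])
qed

lemma case60:
  assumes v: "v \<in> V" and n: "card V = 60"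
  shows "imprimitive G V"
proof -
  have st1: "card (Stb G y) = 1" if "y \<in> V" for y
    using stab_card[OF that] n by simp
  have stid: "Stb G y = {id}" if y: "y \<in> V" for y
  proof -
    have "id \<in> Stb G y" using gid by (simp add: Stb_def)
    thus ?thesis using st1[OF y] by (metis card_1_singletonE singletonD)
  qed
  have reg: "g = k" if "g \<in> G" "k \<in> G" "g y = k y" "y \<in> V" for g k y
  proof -
    have "Hilbert_Choice.inv k \<circ> g \<in> Stb G y"
      using that gpinv2[OF that(2)] by (simp add: Stb_def gc ginv)
    hence "Hilbert_Choice.inv k \<circ> g = id" using stid[OF that(4)] by blast
    hence "k \<circ> (Hilbert_Choice.inv k \<circ> g) = k" by simp
    moreover have "k \<circ> (Hilbert_Choice.inv k \<circ> g) = g" using gpinv1[OF that(2)] by (simp add: fun_eq_iff)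
    ultimately show ?thesis by simp
  qed
  have "C2 \<noteq> {}" using cardC(1) by auto
  then obtain t where t: "t \<in> C2" by blast
  have tG: "t \<in> G" and tt: "t \<circ> t = id" and ti: "t \<noteq> id" using t by (auto simp: C2_def)
  have tv: "t v \<noteq> v"
  proof
    assume "t v = v" hence "t = id" using reg[OF tG gid _ v] by simp
    thus False using ti by simp
  qed
  define B where "B = {v, t v}"
  have BV: "B \<subseteq> V" using v gV[OF tG v] by (simp add: B_def)
  have blk: "is_block G V B"
    unfolding is_block_def
  proof (intro conjI ballI)
    show "B \<subseteq> V" by (rule BV)
    fix g assume g: "g \<in> G"
    have tvt: "t (t v) = v" using tt by (metis comp_apply id_apply)
    show "g ` B = B \<or> g ` B \<inter> B = {}"
    proof (cases "g ` B \<inter> B = {}")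
      case False
      have "g = id \<or> g = t"
      proof -
        have c: "g v = v \<or> g v = t v \<or> g (t v) = v \<or> g (t v) = t v" using False by (auto simp: B_def)
        have gt: "g \<circ> t \<in> G" using g tG by (rule gc)
        show ?thesis
        proof (rule disjE[OF c])
          assume "g v = v" thus ?thesis using reg[OF g gid _ v] by simp
        next
          assume "g v = t v \<or> g (t v) = v \<or> g (t v) = t v"
          thus ?thesis
          proof (elim disjE)
            assume "g v = t v" thus ?thesis using reg[OF g tG _ v] by simp
          next
            assume "g (t v) = v"
            hence "g \<circ> t = id" using reg[OF gt gid _ v] by simp
            hence "g \<circ> t \<circ> t = t" by simp
            hence "g = t" using tt by (simp add: o_assoc[symmetric])
            thus ?thesis by simp
          next
            assume "g (t v) = t v"
            hence "g \<circ> t = t" using reg[OF gt tG _ v] by simp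
            hence "g \<circ> t \<circ> t = t \<circ> t" by simp
            hence "g = id" using tt by (simp add: o_assoc[symmetric])
            thus ?thesis by simp
          qed
        qed
      qed
      thus ?thesis
      proof
        assume "g = id" thus ?thesis by simp
      next
        assume "g = t" thus ?thesis using tvt by (auto simp: B_def)
      qed
    qed simp
  qed
  have "card B = 2" using tv by (simp add: B_def)
  thus ?thesis using blk n by (auto simp: imprimitive_def)
qed

end


lemma double_count:
  assumes "finite A" "finite B"
  shows "(\<Sum>a\<in>A. card {b\<in>B. R a b}) = (\<Sum>b\<in>B. card {a\<in>A. R a b})"
proof -
  have "(\<Sum>a\<in>A. card {b\<in>B. R a b}) = (\<Sum>a\<in>A. \<Sum>b\<in>B. if R a b then 1 else 0)"
    using assms(2) by (simp add: sum.If_cases Collect_conj_eq Int_commute)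
  also have "\<dots> = (\<Sum>b\<in>B. \<Sum>a\<in>A. if R a b then 1 else 0)" by (rule sum.swap)
  also have "\<dots> = (\<Sum>b\<in>B. card {a\<in>A. R a b})"
    using assms(1) by (simp add: sum.If_cases Collect_conj_eq Int_commute)
  finally show ?thesis .
qed

locale PetCtx =
  fixes V :: "'a set" and E :: "'a \<Rightarrow> 'a \<Rightarrow> bool" and v :: 'a
  assumes fin: "finite V" and sg: "simple_graph V E" and vt: "vertex_transitive V E"
    and ev: "\<forall>g\<in>graph_auts V E. evenperm g" and v: "v \<in> V" and c10: "card V = 10"
    and c3: "card {w\<in>V. E v w} = 3"
    and trN: "\<forall>x\<in>{w\<in>V. E v w}. \<forall>y\<in>{w\<in>V. E v w}. \<exists>h\<in>graph_auts V E. h v = v \<and> h x = y"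
    and trM: "\<forall>x\<in>V - {v} - {w\<in>V. E v w}. \<forall>y\<in>V - {v} - {w\<in>V. E v w}. \<exists>h\<in>graph_auts V E. h v = v \<and> h x = y"
begin

abbreviation "Au \<equiv> graph_auts V E"
definition "nb u = {w\<in>V. E u w}"
abbreviation "N \<equiv> nb v"
definition "M = V - {v} - N"

lemma pgA: "is_pgroup V Au" by (rule auts_pgroup[OF sg])
lemma aperm: "g \<in> Au \<Longrightarrow> g permutes V" by (simp add: graph_auts_def)
lemma aE: "g \<in> Au \<Longrightarrow> u \<in> V \<Longrightarrow> w \<in> V \<Longrightarrow> E (g u) (g w) \<longleftrightarrow> E u w" by (simp add: graph_auts_def)
lemma aV: "g \<in> Au \<Longrightarrow> u \<in> V \<Longrightarrow> g u \<in> V" using permutes_in_image[OF aperm] by blast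
lemma ainv: "g \<in> Au \<Longrightarrow> Hilbert_Choice.inv g \<in> Au" using pg_inv[OF pgA] .
lemma ainv1: "g \<in> Au \<Longrightarrow> g (Hilbert_Choice.inv g y) = y" using permutes_inverses(1)[OF aperm] .
lemma ainv2: "g \<in> Au \<Longrightarrow> Hilbert_Choice.inv g (g y) = y" using permutes_inverses(2)[OF aperm] .
lemma ainj: "g \<in> Au \<Longrightarrow> g x = g y \<longleftrightarrow> x = y" using permutes_inj[OF aperm] by (metis injD)
lemma Esym: "E a b \<Longrightarrow> E b a" using sg by (simp add: simple_graph_def)
lemma Eirr: "\<not> E a a" using sg by (simp add: simple_graph_def)
lemma EV: "E a b \<Longrightarrow> a \<in> V \<and> b \<in> V" using sg by (simp add: simple_graph_def)
lemma trans_to_v: "u \<in> V \<Longrightarrow> \<exists>g\<in>Au. g u = v" using vt v by (simp add: vertex_transitive_def)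

lemma nb_img: assumes g: "g \<in> Au" and u: "u \<in> V" shows "g ` nb u = nb (g u)"
proof
  show "g ` nb u \<subseteq> nb (g u)" using aE[OF g u] aV[OF g] by (auto simp: nb_def)
  show "nb (g u) \<subseteq> g ` nb u"
  proof
    fix y assume y: "y \<in> nb (g u)"
    hence yV: "y \<in> V" and e: "E (g u) y" by (auto simp: nb_def)
    let ?z = "Hilbert_Choice.inv g y"
    have zV: "?z \<in> V" using aV[OF ainv[OF g] yV] .
    have "E (g u) (g ?z)" using e ainv1[OF g] by simp
    hence "E u ?z" using aE[OF g u zV] by simp
    hence "?z \<in> nb u" using zV by (simp add: nb_def)
    moreover have "y = g ?z" using ainv1[OF g] by simp
    ultimately show "y \<in> g ` nb u" by blast
  qed
qed

lemma nb_card: assumes u: "u \<in> V" shows "card (nb u) = 3"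
proof -
  obtain g where g: "g \<in> Au" "g u = v" using trans_to_v[OF u] by blast
  have "inj_on g (nb u)" using permutes_inj[OF aperm[OF g(1)]] by (simp add: inj_on_def inj_def)
  hence "card (g ` nb u) = card (nb u)" by (rule card_image)
  thus ?thesis using nb_img[OF g(1) u] g(2) c3 by (simp add: nb_def)
qed

lemma N_sub: "N \<subseteq> V" by (auto simp: nb_def)
lemma finN: "finite N" using finite_subset[OF N_sub fin] .
lemma vN: "v \<notin> N" using Eirr by (simp add: nb_def)

lemma stabN: assumes "h \<in> Au" "h v = v" "x \<in> N" shows "h x \<in> N"
proof -
  have "h x \<in> h ` N" using assms(3) by blast
  thus ?thesis using nb_img[OF assms(1) v] assms(2) by simp
qed
lemma stabM: assumes h: "h \<in> Au" "h v = v" and x: "x \<in> M" shows "h x \<in> M"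
proof -
  have xV: "x \<in> V" using x by (simp add: M_def)
  have "h x \<noteq> v" using x h ainj[OF h(1), of x v] by (auto simp: M_def)
  moreover have "h x \<notin> N"
  proof
    assume "h x \<in> N" hence "E (h v) (h x)" using h by (simp add: nb_def)
    hence "E v x" using aE[OF h(1) v xV] by simp
    thus False using x xV by (simp add: M_def nb_def)
  qed
  ultimately show ?thesis using aV[OF h(1) xV] by (simp add: M_def)
qed

lemma N_indep: assumes x: "x \<in> N" and y: "y \<in> N" shows "\<not> E x y"
proof
  assume exy: "E x y"
  have xy: "x \<noteq> y" using exy Eirr by auto
  have xV: "x \<in> V" and yV: "y \<in> V" using x y N_sub by auto
  have card2: "card (N - {a}) = 2" if "a \<in> N" for a using c3 that finN by (simp add: nb_def)
  obtain z where z: "z \<in> N" "z \<noteq> x" "z \<noteq> y"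
  proof -
    have "card {x, y} = 2" using xy by simp
    hence "N \<noteq> {x, y}" using c3 by (auto simp: nb_def)
    moreover have "{x, y} \<subseteq> N" using x y by simp
    ultimately show ?thesis using that by blast
  qed
  have Nxyz: "N = {x, y, z}"
  proof -
    have "{x, y, z} \<subseteq> N" using x y z by simp
    moreover have "card {x, y, z} = 3" using xy z by simp
    ultimately show ?thesis using card_subset_eq[OF finN] c3 by (metis nb_def)
  qed
  obtain h where h: "h \<in> Au" "h v = v" "h x = z" using trN x z unfolding nb_def by blast
  have hy: "h y \<in> N" using stabN[OF h(1,2) y] .
  have "h y \<noteq> z" using h ainj[OF h(1), of y x] xy by simp
  hence hy2: "h y = x \<or> h y = y" using hy Nxyz by auto
  have ez: "E z (h y)" using aE[OF h(1) xV yV] exy h by simp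
  obtain a where a: "a \<in> N" "N - {a} \<subseteq> nb a"
  proof (cases "h y = x")
    case True
    hence "N - {x} \<subseteq> nb x" using ez exy Esym Nxyz z yV EV by (auto simp: nb_def)
    thus ?thesis using that x by blast
  next
    case False
    hence "h y = y" using hy2 by simp
    hence "N - {y} \<subseteq> nb y" using ez exy Esym Nxyz z xV EV by (auto simp: nb_def)
    thus ?thesis using that y by blast
  qed
  have all: "N - {b} \<subseteq> nb b" if b: "b \<in> N" for b
  proof
    fix c assume c: "c \<in> N - {b}"
    obtain k where k: "k \<in> Au" "k v = v" "k a = b" using trN a(1) b unfolding nb_def by blast
    define c' where "c' = Hilbert_Choice.inv k c"
    have kc': "k c' = c" unfolding c'_def by (rule ainv1[OF k(1)])
    have k'v: "Hilbert_Choice.inv k v = v" using ainv2[OF k(1), of v] k(2) by simp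
    have c'N: "c' \<in> N" unfolding c'_def using stabN[OF ainv[OF k(1)] k'v] c by blast
    have "c' \<noteq> a" using kc' k(3) c by auto
    hence "E a c'" using a(2) c'N by (auto simp: nb_def)
    hence "E (k a) (k c')" using aE[OF k(1)] a(1) c'N N_sub by blast
    thus "c \<in> nb b" using kc' k(3) c N_sub by (auto simp: nb_def)
  qed
  \<comment> \<open>now v and N form a 4-clique closed under adjacency\<close>
  define K where "K = insert v N"
  have Kclq: "E a b" if ab: "a \<in> K" "b \<in> K" "a \<noteq> b" for a b
  proof (cases "a = v")
    case True
    hence "b \<in> N" using ab by (simp add: K_def)
    thus ?thesis using True by (simp add: nb_def)
  next
    case False
    hence aN: "a \<in> N" using ab by (simp add: K_def)
    show ?thesis
    proof (cases "b = v")
      case True thus ?thesis using aN Esym by (simp add: nb_def)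
    next
      case False
      hence "b \<in> N - {a}" using ab by (simp add: K_def)
      thus ?thesis using all[OF aN] by (auto simp: nb_def)
    qed
  qed
  have KV: "K \<subseteq> V" using v N_sub by (simp add: K_def)
  have cN: "card N = 3" using c3 by (simp add: nb_def)
  have cK: "card K = 4" using vN finN cN by (simp add: K_def)
  have nbx: "nb a \<subseteq> K" if a: "a \<in> N" for a
  proof -
    have aK: "a \<in> K" using a by (simp add: K_def)
    have "K - {a} \<subseteq> nb a"
    proof
      fix b assume b: "b \<in> K - {a}"
      hence "E a b" using Kclq[OF aK] by blast
      thus "b \<in> nb a" using b KV by (auto simp: nb_def)
    qed
    moreover have "card (K - {a}) = 3" using aK cK finN by (simp add: K_def)
    moreover have "finite (nb a)" using fin by (simp add: nb_def)
    moreover have "card (nb a) = 3" using nb_card a N_sub by blast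
    ultimately have "K - {a} = nb a" using card_subset_eq by metis
    thus ?thesis by blast
  qed
  have Kcl: "b \<in> K" if "a \<in> K" "E a b" for a b
  proof (cases "a = v")
    case True thus ?thesis using that EV by (auto simp: K_def nb_def)
  next
    case False thus ?thesis using that nbx EV unfolding K_def by (auto simp: nb_def)
  qed
  have "M = V - K" by (auto simp: M_def K_def)
  hence "card M = 6" using card_Diff_subset[OF finite_subset[OF KV fin] KV] c10 cK by simp
  then obtain m where m: "m \<in> M" by (metis card.empty ex_in_conv zero_neq_numeral)
  have mV: "m \<in> V" using m by (simp add: M_def)
  obtain g where g: "g \<in> Au" "g v = m"
  proof -
    obtain g0 where "g0 \<in> Au" "g0 m = v" using trans_to_v[OF mV] by blast
    thus ?thesis using that[of "Hilbert_Choice.inv g0"] ainv ainv2 by metis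
  qed
  define K' where "K' = g ` K"
  have K'cl: "b \<in> K'" if aK: "a \<in> K'" "E a b" for a b
  proof -
    obtain a0 where a0: "a0 \<in> K" "a = g a0" using aK(1) by (auto simp: K'_def)
    have bV: "b \<in> V" using aK(2) EV by blast
    define b0 where "b0 = Hilbert_Choice.inv g b"
    have gb0: "g b0 = b" unfolding b0_def by (rule ainv1[OF g(1)])
    have b0V: "b0 \<in> V" unfolding b0_def by (rule aV[OF ainv[OF g(1)] bV])
    have "E (g a0) (g b0)" using aK(2) a0 gb0 by simp
    hence "E a0 b0" using aE[OF g(1)] a0(1) KV b0V by blast
    hence "b0 \<in> K" using Kcl a0(1) by blast
    thus ?thesis using gb0 by (auto simp: K'_def)
  qed
  have disj: "K \<inter> K' = {}"
  proof (rule ccontr)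
    assume "K \<inter> K' \<noteq> {}"
    then obtain a where a: "a \<in> K" "a \<in> K'" by blast
    have "K \<subseteq> K'"
    proof
      fix b assume b: "b \<in> K"
      show "b \<in> K'"
      proof (cases "b = a")
        case True thus ?thesis using a by simp
      next
        case False thus ?thesis using Kclq[OF a(1) b] K'cl[OF a(2)] by metis
      qed
    qed
    hence "v \<in> K'" by (simp add: K_def)
    then obtain a0 where a0: "a0 \<in> K" "v = g a0" by (auto simp: K'_def)
    have "a0 = v \<or> a0 \<in> N" using a0 by (simp add: K_def)
    thus False
    proof
      assume "a0 = v"
      hence "m = v" using a0 g by simp
      moreover have "v \<notin> M" by (simp add: M_def)
      ultimately show False using m by simp
    next
      assume a0N: "a0 \<in> N"
      hence "E v a0" by (simp add: nb_def)
      hence "E (g v) (g a0)" using aE[OF g(1) v] a0N N_sub by blast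
      hence "E m v" using g a0 by simp
      thus False using m Esym mV by (auto simp: M_def nb_def)
    qed
  qed
  have cK': "card K' = 4" unfolding K'_def using cK card_image permutes_inj[OF aperm[OF g(1)]]
    by (metis inj_on_subset subset_UNIV)
  have K'V: "K' \<subseteq> V" unfolding K'_def using KV aV[OF g(1)] by blast
  define R where "R = V - K - K'"
  have cR: "card R = 2"
  proof -
    have "card (K \<union> K') = 8" using disj cK cK' fin KV K'V by (simp add: card_Un_disjoint finite_subset)
    moreover have "K \<union> K' \<subseteq> V" using KV K'V by simp
    ultimately have "card (V - (K \<union> K')) = 2"
      using c10 card_Diff_subset[OF finite_subset[OF _ fin], of "K \<union> K'"] by simp
    moreover have "V - K - K' = V - (K \<union> K')" by blast
    ultimately show ?thesis by (simp add: R_def)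
  qed
  then obtain r where r: "r \<in> R" by (metis card.empty ex_in_conv zero_neq_numeral)
  have rV: "r \<in> V" using r by (simp add: R_def)
  have "nb r \<subseteq> R - {r}"
  proof
    fix b assume b: "b \<in> nb r"
    hence bV: "b \<in> V" and e: "E r b" by (auto simp: nb_def)
    have "b \<notin> K" using Kcl[OF _ Esym[OF e]] r by (auto simp: R_def)
    moreover have "b \<notin> K'" using K'cl[OF _ Esym[OF e]] r by (auto simp: R_def)
    moreover have "b \<noteq> r" using e Eirr by auto
    ultimately show "b \<in> R - {r}" using bV by (simp add: R_def)
  qed
  hence "card (nb r) \<le> card (R - {r})" using fin by (intro card_mono) (auto simp: R_def)
  thus False using nb_card[OF rV] cR r by simp
qed

lemma tri_free: assumes "E a b" "E b c" "E a c" shows False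
proof -
  have av: "a \<in> V" and bv: "b \<in> V" and cv: "c \<in> V" using assms EV by auto
  obtain g where g: "g \<in> Au" "g a = v" using trans_to_v[OF av] by blast
  have "E v (g b)" using aE[OF g(1) av bv] assms(1) g(2) by simp
  hence b': "g b \<in> N" using aV[OF g(1) bv] by (simp add: nb_def)
  have "E v (g c)" using aE[OF g(1) av cv] assms(3) g(2) by simp
  hence c': "g c \<in> N" using aV[OF g(1) cv] by (simp add: nb_def)
  have "E (g b) (g c)" using aE[OF g(1) bv cv] assms(2) by simp
  thus False using N_indep[OF b' c'] by simp
qed

lemma M_V: "x \<in> M \<Longrightarrow> x \<in> V" by (simp add: M_def)
lemma M_nv: "x \<in> M \<Longrightarrow> \<not> E v x" by (simp add: M_def nb_def)
lemma M_ne_v: "x \<in> M \<Longrightarrow> x \<noteq> v" by (simp add: M_def)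
lemma N_E: "x \<in> N \<Longrightarrow> E v x" by (simp add: nb_def)
lemma N_V: "x \<in> N \<Longrightarrow> x \<in> V" by (simp add: nb_def)
lemma MN_disj: "x \<in> M \<Longrightarrow> x \<notin> N" by (simp add: M_def)

lemma nbN: assumes x: "x \<in> N" shows "nb x - {v} \<subseteq> M" "card (nb x - {v}) = 2"
proof -
  show "nb x - {v} \<subseteq> M"
  proof
    fix w assume w: "w \<in> nb x - {v}"
    hence wV: "w \<in> V" and e: "E x w" and wv: "w \<noteq> v" by (auto simp: nb_def)
    have "w \<notin> N" using N_indep[OF x] e by blast
    thus "w \<in> M" using wV wv by (simp add: M_def)
  qed
  have "v \<in> nb x" using Esym[OF N_E[OF x]] v by (simp add: nb_def)
  moreover have "finite (nb x)" using fin by (simp add: nb_def)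
  ultimately show "card (nb x - {v}) = 2" using nb_card[OF N_V[OF x]] by simp
qed

lemma finM: "finite M" using fin by (simp add: M_def)

lemma cardM: "card M = 6"
proof -
  have KV: "insert v N \<subseteq> V" using v N_sub by simp
  have "card (insert v N) = 4" using vN finN c3 by (simp add: nb_def)
  moreover have "M = V - insert v N" by (auto simp: M_def)
  ultimately show ?thesis using card_Diff_subset[OF finite_subset[OF KV fin] KV] c10 by simp
qed

lemma mu_const: assumes m: "m \<in> M" and m': "m' \<in> M" shows "card (nb m \<inter> N) = card (nb m' \<inter> N)"
proof -
  obtain h where h: "h \<in> Au" "h v = v" "h m = m'" using trM m m' unfolding M_def nb_def by blast
  have inj: "inj h" using permutes_inj[OF aperm[OF h(1)]] .
  have "h ` (nb m \<inter> N) = h ` nb m \<inter> h ` N" using inj by (simp add: image_Int)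
  also have "\<dots> = nb m' \<inter> N" using nb_img[OF h(1) M_V[OF m]] nb_img[OF h(1) v] h by simp
  finally have "h ` (nb m \<inter> N) = nb m' \<inter> N" .
  moreover have "card (h ` (nb m \<inter> N)) = card (nb m \<inter> N)" using inj by (simp add: card_image inj_on_def inj_def)
  ultimately show ?thesis by simp
qed

lemma mu1: assumes m: "m \<in> M" shows "card (nb m \<inter> N) = 1"
proof -
  have dc: "(\<Sum>x\<in>N. card {y\<in>M. E x y}) = (\<Sum>y\<in>M. card {x\<in>N. E x y})"
    by (rule double_count[OF finN finM])
  have l: "card {y\<in>M. E x y} = 2" if x: "x \<in> N" for x
  proof -
    have "{y\<in>M. E x y} = nb x - {v}" using nbN(1)[OF x] M_V M_ne_v by (auto simp: nb_def)
    thus ?thesis using nbN(2)[OF x] by simp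
  qed
  have r: "card {x\<in>N. E x y} = card (nb m \<inter> N)" if y: "y \<in> M" for y
  proof -
    have "{x\<in>N. E x y} = nb y \<inter> N" using Esym N_V by (auto simp: nb_def)
    thus ?thesis using mu_const[OF y m] by simp
  qed
  have "(\<Sum>x\<in>N. card {y\<in>M. E x y}) = 6" using l c3 by (simp add: nb_def)
  moreover have "(\<Sum>y\<in>M. card {x\<in>N. E x y}) = 6 * card (nb m \<inter> N)" using r cardM by simp
  ultimately show ?thesis using dc by simp
qed

lemma uniq: assumes a: "a \<in> V" and b: "b \<in> V" and ab: "a \<noteq> b" and ne: "\<not> E a b"
  shows "card (nb a \<inter> nb b) = 1"
proof -
  obtain g where g: "g \<in> Au" "g a = v" using trans_to_v[OF a] by blast
  have inj: "inj g" using permutes_inj[OF aperm[OF g(1)]] .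
  have gbV: "g b \<in> V" using aV[OF g(1) b] .
  have "g b \<noteq> v" using g ab ainj[OF g(1), of b a] by simp
  moreover have "\<not> E v (g b)" using aE[OF g(1) a b] ne g by simp
  ultimately have gbM: "g b \<in> M" using gbV by (simp add: M_def nb_def)
  have "g ` (nb a \<inter> nb b) = g ` nb a \<inter> g ` nb b" using inj by (simp add: image_Int)
  also have "\<dots> = N \<inter> nb (g b)" using nb_img[OF g(1) a] nb_img[OF g(1) b] g by simp
  finally have "g ` (nb a \<inter> nb b) = nb (g b) \<inter> N" by blast
  moreover have "card (g ` (nb a \<inter> nb b)) = card (nb a \<inter> nb b)" using inj by (simp add: card_image inj_on_def inj_def)
  ultimately show ?thesis using mu1[OF gbM] by simp
qed

lemma uniq_N: assumes m: "m \<in> M" and x: "x \<in> N" "E x m" and y: "y \<in> N" "E y m" shows "x = y"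
proof -
  have "x \<in> nb m \<inter> N" using x Esym[OF x(2)] N_V[OF x(1)] by (simp add: nb_def)
  moreover have "y \<in> nb m \<inter> N" using y Esym[OF y(2)] N_V[OF y(1)] by (simp add: nb_def)
  moreover obtain z where "nb m \<inter> N = {z}" using mu1[OF m] by (rule card_1_singletonE)
  ultimately show ?thesis by simp
qed

end


context PetCtx
begin

lemma contra: False
proof -
  have "card N = 3" using c3 by (simp add: nb_def)
  then obtain x1 x2 x3 where Nx: "N = {x1, x2, x3}" and x12: "x1 \<noteq> x2" and x23: "x2 \<noteq> x3" and x13: "x1 \<noteq> x3"
    by (auto simp: card_3_iff)
  have x1N: "x1 \<in> N" and x2N: "x2 \<in> N" and x3N: "x3 \<in> N" using Nx by auto
  have pair: "\<exists>a b. nb x - {v} = {a, b} \<and> a \<noteq> b" if "x \<in> N" for x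
    using nbN(2)[OF that] by (simp add: card_2_iff)
  obtain a1 b1 where p1: "nb x1 - {v} = {a1, b1}" "a1 \<noteq> b1" using pair[OF x1N] by blast
  obtain a2 b2 where p2: "nb x2 - {v} = {a2, b2}" "a2 \<noteq> b2" using pair[OF x2N] by blast
  obtain a3 b3 where p3: "nb x3 - {v} = {a3, b3}" "a3 \<noteq> b3" using pair[OF x3N] by blast
  have M1: "a1 \<in> M" "b1 \<in> M" using nbN(1)[OF x1N] p1 by auto
  have M2: "a2 \<in> M" "b2 \<in> M" using nbN(1)[OF x2N] p2 by auto
  have M3: "a3 \<in> M" "b3 \<in> M" using nbN(1)[OF x3N] p3 by auto
  have E1: "E x1 a1" "E x1 b1" using p1 by (auto simp: nb_def)
  have E2: "E x2 a2" "E x2 b2" using p2 by (auto simp: nb_def)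
  have E3: "E x3 a3" "E x3 b3" using p3 by (auto simp: nb_def)
  have vnb: "v \<in> nb x" if "x \<in> N" for x using Esym[OF N_E[OF that]] v by (simp add: nb_def)
  have nb1: "nb x1 = {v, a1, b1}" using p1 vnb[OF x1N] by blast
  have nb2: "nb x2 = {v, a2, b2}" using p2 vnb[OF x2N] by blast
  have nb3: "nb x3 = {v, a3, b3}" using p3 vnb[OF x3N] by blast
  have dis: "p \<noteq> q" if "p \<in> M" "q \<in> M" "x \<in> N" "y \<in> N" "E x p" "E y q" "x \<noteq> y" for p q x y
    using uniq_N[OF that(1,3,5)] uniq_N[of q y x] that by metis
  have d12: "a1 \<noteq> a2" "a1 \<noteq> b2" "b1 \<noteq> a2" "b1 \<noteq> b2"
    using dis M1 M2 x1N x2N E1 E2 x12 by blast+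
  have d13: "a1 \<noteq> a3" "a1 \<noteq> b3" "b1 \<noteq> a3" "b1 \<noteq> b3"
    using dis M1 M3 x1N x3N E1 E3 x13 by blast+
  have d23: "a2 \<noteq> a3" "a2 \<noteq> b3" "b2 \<noteq> a3" "b2 \<noteq> b3"
    using dis M2 M3 x2N x3N E2 E3 x23 by blast+
  note ds = d12 d13 d23 p1(2) p2(2) p3(2)
  define \<tau> where "\<tau> = transpose a1 b1 \<circ> (transpose a2 b2 \<circ> transpose a3 b3)"
  have ta: "\<tau> a1 = b1" "\<tau> b1 = a1" "\<tau> a2 = b2" "\<tau> b2 = a2" "\<tau> a3 = b3" "\<tau> b3 = a3"
    unfolding \<tau>_def using ds by (simp_all add: transpose_def)
  have tfix: "\<tau> u = u" if "u \<notin> M" for u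
  proof -
    have "u \<noteq> a1" "u \<noteq> b1" "u \<noteq> a2" "u \<noteq> b2" "u \<noteq> a3" "u \<noteq> b3" using that M1 M2 M3 by auto
    thus ?thesis unfolding \<tau>_def by (simp add: transpose_def)
  qed
  have Msub: "{a1, b1, a2, b2, a3, b3} \<subseteq> M" using M1 M2 M3 by simp
  have "card {a1, b1, a2, b2, a3, b3} = 6" using ds by simp
  hence Meq: "M = {a1, b1, a2, b2, a3, b3}" using card_subset_eq[OF finM Msub] cardM by simp
  have tt: "\<tau> (\<tau> u) = u" for u
  proof (cases "u \<in> M")
    case True thus ?thesis using Meq ta by auto
  next
    case False thus ?thesis using tfix by simp
  qed
  have odd: "\<not> evenperm \<tau>"
    unfolding \<tau>_def using ds
    by (simp add: evenperm_comp permutation_compose permutation_swap_id evenperm_swap)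
  have MV: "M \<subseteq> V" by (auto simp: M_def)
  have tperm: "\<tau> permutes V"
    unfolding \<tau>_def using M1 M2 M3 MV by (intro permutes_compose permutes_swap_id) auto
  define T where "T p q x \<longleftrightarrow> x \<in> N \<and> p \<in> M \<and> q \<in> M \<and> p \<noteq> q \<and> nb x = {v, p, q} \<and> \<tau> p = q" for p q x
  have Tex: "\<exists>q x. T p q x" if p: "p \<in> M" for p
  proof -
    have "p = a1 \<or> p = b1 \<or> p = a2 \<or> p = b2 \<or> p = a3 \<or> p = b3" using p Meq by simp
    thus ?thesis
    proof (elim disjE)
      assume "p = a1" thus ?thesis using x1N M1 p1(2) nb1 ta unfolding T_def by blast
    next
      assume "p = b1" thus ?thesis using x1N M1 p1(2) nb1 ta unfolding T_def by (metis insert_commute)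
    next
      assume "p = a2" thus ?thesis using x2N M2 p2(2) nb2 ta unfolding T_def by blast
    next
      assume "p = b2" thus ?thesis using x2N M2 p2(2) nb2 ta unfolding T_def by (metis insert_commute)
    next
      assume "p = a3" thus ?thesis using x3N M3 p3(2) nb3 ta unfolding T_def by blast
    next
      assume "p = b3" thus ?thesis using x3N M3 p3(2) nb3 ta unfolding T_def by (metis insert_commute)
    qed
  qed
  have key: "E q q'" if T1: "T p q x" and T2: "T p' q' x'" and epp: "E p p'" for p q x p' q' x'
  proof (rule ccontr)
    assume nq: "\<not> E q q'"
    have xN: "x \<in> N" and pM: "p \<in> M" and qM: "q \<in> M" and pq: "p \<noteq> q" and nbx: "nb x = {v, p, q}"
      using T1 by (auto simp: T_def)
    have x'N: "x' \<in> N" and p'M: "p' \<in> M" and q'M: "q' \<in> M" and nbx': "nb x' = {v, p', q'}"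
      using T2 by (auto simp: T_def)
    have Exp: "E x p" "E x q" using nbx by (auto simp: nb_def)
    have Exp': "E x' p'" "E x' q'" using nbx' by (auto simp: nb_def)
    have xx': "x \<noteq> x'"
    proof
      assume "x = x'"
      thus False using tri_free[OF Exp(1) epp] Exp'(1) by simp
    qed
    have nqx': "\<not> E q x'" using uniq_N[OF qM x'N _ xN Exp(2)] Esym xx' by blast
    have qx': "q \<noteq> x'" using qM x'N MN_disj by blast
    have c1: "card (nb q \<inter> nb x') = 1" by (rule uniq[OF M_V[OF qM] N_V[OF x'N] qx' nqx'])
    then obtain c where c: "nb q \<inter> nb x' = {c}" by (rule card_1_singletonE)
    have cv: "c \<noteq> v" using c M_nv[OF qM] Esym by (auto simp: nb_def)
    have cq': "c \<noteq> q'" using c nq by (auto simp: nb_def)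
    have "c \<in> nb x'" using c by blast
    hence "c = p'" using nbx' cv cq' by simp
    hence Eqp': "E q p'" using c by (auto simp: nb_def)
    have npq: "\<not> E p q" using tri_free[OF Exp(1) _ Exp(2)] by blast
    have "{x, p'} \<subseteq> nb p \<inter> nb q"
      using Esym[OF Exp(1)] Esym[OF Exp(2)] epp Eqp' N_V[OF xN] M_V[OF p'M] by (simp add: nb_def)
    moreover have "x \<noteq> p'" using xN p'M MN_disj by blast
    moreover have "finite (nb p \<inter> nb q)" using fin by (simp add: nb_def)
    ultimately have "2 \<le> card (nb p \<inter> nb q)" by (metis card_2_iff card_mono)
    moreover have "card (nb p \<inter> nb q) = 1" by (rule uniq[OF M_V[OF pM] M_V[OF qM] pq npq])
    ultimately show False by simp
  qed
  have VM: "u \<in> V \<Longrightarrow> u \<notin> M \<Longrightarrow> u = v \<or> u \<in> N" for u by (auto simp: M_def)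
  have edgeNM: "E (\<tau> u) (\<tau> w)" if e: "E u w" and u: "u \<notin> M" and w: "w \<in> M" for u w
  proof -
    obtain q x where T: "T w q x" using Tex[OF w] by blast
    have xN: "x \<in> N" and nbx: "nb x = {v, w, q}" and tw: "\<tau> w = q" using T by (auto simp: T_def)
    have uV: "u \<in> V" using e EV by blast
    have "u \<noteq> v" using e M_nv[OF w] by blast
    hence uN: "u \<in> N" using VM[OF uV u] by blast
    have "E x w" using nbx by (auto simp: nb_def)
    hence "u = x" using uniq_N[OF w uN e xN] by blast
    moreover have "E x q" using nbx by (auto simp: nb_def)
    ultimately show ?thesis using tfix[OF u] tw by simp
  qed
  have edge: "E (\<tau> u) (\<tau> w)" if e: "E u w" for u w
  proof (cases "u \<in> M")
    case uM: True
    show ?thesis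
    proof (cases "w \<in> M")
      case True
      obtain q x where T1: "T u q x" using Tex[OF uM] by blast
      obtain q' x' where T2: "T w q' x'" using Tex[OF True] by blast
      have "E q q'" by (rule key[OF T1 T2 e])
      moreover have "\<tau> u = q" "\<tau> w = q'" using T1 T2 by (auto simp: T_def)
      ultimately show ?thesis by simp
    next
      case False
      thus ?thesis using edgeNM[OF Esym[OF e] False uM] Esym by blast
    qed
  next
    case uM: False
    show ?thesis
    proof (cases "w \<in> M")
      case True thus ?thesis using edgeNM[OF e uM True] by blast
    next
      case False thus ?thesis using e tfix uM by simp
    qed
  qed
  have "\<tau> \<in> Au"
  proof -
    have "E (\<tau> u) (\<tau> w) \<longleftrightarrow> E u w" if "u \<in> V" "w \<in> V" for u w
      using edge[of u w] edge[of "\<tau> u" "\<tau> w"] tt by auto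
    thus ?thesis using tperm by (simp add: graph_auts_def)
  qed
  thus False using ev odd by blast
qed

end

lemma petersen:
  assumes "finite V" "simple_graph V E" "vertex_transitive V E"
    "\<forall>g\<in>graph_auts V E. evenperm g" "v \<in> V" "card V = 10"
    "card {w\<in>V. E v w} = 3"
    "\<forall>x\<in>{w\<in>V. E v w}. \<forall>y\<in>{w\<in>V. E v w}. \<exists>h\<in>graph_auts V E. h v = v \<and> h x = y"
    "\<forall>x\<in>V - {v} - {w\<in>V. E v w}. \<forall>y\<in>V - {v} - {w\<in>V. E v w}. \<exists>h\<in>graph_auts V E. h v = v \<and> h x = y"
  shows False
proof -
  interpret PetCtx V E v using assms by unfold_locales
  show False by (rule contra)
qed


lemma sum_const_eq:
  assumes "finite S" "\<And>x. x \<in> S \<Longrightarrow> (b::nat) \<le> \<phi> x" "(\<Sum>x\<in>S. \<phi> x) \<le> b * card S"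
  shows "\<And>x. x \<in> S \<Longrightarrow> \<phi> x = b"
proof (rule ccontr)
  fix x assume x: "x \<in> S" and ne: "\<phi> x \<noteq> b"
  hence lt: "b < \<phi> x" using assms(2) by force
  have "(\<Sum>y\<in>S. b) < (\<Sum>y\<in>S. \<phi> y)"
    by (rule sum_strict_mono_ex1[OF assms(1)]) (use assms(2) x lt in auto)
  thus False using assms(3) by (simp add: mult.commute)
qed

context A5g
begin

lemma Fx_id: "Fx V id = V" by (auto simp: Fx_def)

lemma burn_split:
  "card V + (\<Sum>g\<in>C2. card (Fx V g)) + (\<Sum>g\<in>C3. card (Fx V g)) + (\<Sum>g\<in>C5. card (Fx V g)) = 60"
proof -
  have "G \<inter> {id} = {id}" using gid by blast
  moreover have "G \<inter> C2 = C2" "G \<inter> C3 = C3" "G \<inter> C5 = C5" using C_sub by blast+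
  ultimately show ?thesis using sum_split[of G "\<lambda>g. card (Fx V g)"] burnG Fx_id by simp
qed

lemma burnH:
  assumes v: "v \<in> V"
  shows "card {Orb (Stb G v) x | x. x \<in> V} * card (Stb G v) =
     card V + (\<Sum>g\<in>Stb G v \<inter> C2. card (Fx V g)) + (\<Sum>g\<in>Stb G v \<inter> C3. card (Fx V g)) + (\<Sum>g\<in>Stb G v \<inter> C5. card (Fx V g))"
    and "card (Stb G v) = 1 + card (Stb G v \<inter> C2) + card (Stb G v \<inter> C3) + card (Stb G v \<inter> C5)"
proof -
  have i: "Stb G v \<inter> {id} = {id}" using gid by (auto simp: Stb_def)
  show "card {Orb (Stb G v) x | x. x \<in> V} * card (Stb G v) =
     card V + (\<Sum>g\<in>Stb G v \<inter> C2. card (Fx V g)) + (\<Sum>g\<in>Stb G v \<inter> C3. card (Fx V g)) + (\<Sum>g\<in>Stb G v \<inter> C5. card (Fx V g))"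
    using burnside'[OF Stb_pg[OF v] finStb fin] sum_split[OF Stb_sub[of v], of "\<lambda>g. card (Fx V g)"] i Fx_id by simp
  show "card (Stb G v) = 1 + card (Stb G v \<inter> C2) + card (Stb G v \<inter> C3) + card (Stb G v \<inter> C5)"
    using card_split[OF Stb_sub[of v]] i by simp
qed

lemma inStb_Fx: "g \<in> Stb G v \<Longrightarrow> v \<in> V \<Longrightarrow> v \<in> Fx V g" by (simp add: Stb_def Fx_def)

lemma Fx_pos: "g \<in> Stb G v \<Longrightarrow> v \<in> V \<Longrightarrow> 0 < card (Fx V g)"
proof -
  assume "g \<in> Stb G v" "v \<in> V"
  hence "v \<in> Fx V g" by (rule inStb_Fx)
  moreover have "finite (Fx V g)" using fin by (simp add: Fx_def)
  ultimately show ?thesis by (auto simp: card_gt_0_iff)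
qed

lemma finOrbs: "finite {Orb H x | x. x \<in> V}"
  using fin by simp

lemma Orb_Stb_v: "v \<in> V \<Longrightarrow> Orb (Stb G v) v = {v}"
  using Orb_self[OF Stb_pg] by (auto simp: Orb_def Stb_def)

lemma two_orbits:
  assumes v: "v \<in> V" and c: "card {Orb (Stb G v) x | x. x \<in> V} = 2"
  shows False
proof (rule stab_trans_all[OF v])
  fix w1 w2 assume w1: "w1 \<in> V - {v}" and w2: "w2 \<in> V - {v}"
  let ?H = "Stb G v"
  let ?O = "{Orb ?H x | x. x \<in> V}"
  have pgH: "is_pgroup V ?H" by (rule Stb_pg[OF v])
  have o1: "Orb ?H w1 \<noteq> {v}" using Orb_self[OF pgH, of w1] w1 by auto
  have o2: "Orb ?H w2 \<noteq> {v}" using Orb_self[OF pgH, of w2] w2 by auto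
  have eq: "Orb ?H w2 = Orb ?H w1"
  proof (rule ccontr)
    assume ne: "Orb ?H w2 \<noteq> Orb ?H w1"
    have "{{v}, Orb ?H w1, Orb ?H w2} \<subseteq> ?O" using v w1 w2 Orb_Stb_v[OF v] by blast
    hence "card {{v}, Orb ?H w1, Orb ?H w2} \<le> card ?O" by (rule card_mono[OF finOrbs])
    moreover have "card {{v}, Orb ?H w1, Orb ?H w2} = 3" using o1 o2 ne by auto
    ultimately show False using c by simp
  qed
  have "w2 \<in> Orb ?H w1" using eq Orb_self[OF pgH, of w2] by simp
  thus "\<exists>h\<in>?H. h w1 = w2" by (auto simp: Orb_def)
qed

lemma case5:
  assumes v: "v \<in> V" and n: "card V = 5"
  shows False
proof -
  let ?H = "Stb G v"
  have c2: "card (Fx V g) = 1" if gC: "g \<in> C2" for g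
  proof -
    obtain m where m: "card V - card (Fx V g) = 2 * m" "even m" "0 < m" using FX2[OF gC] by blast
    obtain k where "m = 2 * k" using m(2) by (rule evenE)
    thus ?thesis using m(1,3) n by presburger
  qed
  have c3: "card (Fx V g) = 2" if gC: "g \<in> C3" for g
  proof -
    have "3 dvd (5 - card (Fx V g))" "card (Fx V g) < 5" using FX3[OF gC] n by auto
    then obtain k where "5 - card (Fx V g) = 3 * k" by (auto simp: dvd_def)
    thus ?thesis using \<open>card (Fx V g) < 5\<close> by presburger
  qed
  have c5: "card (Fx V g) = 0" if gC: "g \<in> C5" for g
  proof -
    have "5 dvd (5 - card (Fx V g))" "card (Fx V g) < 5" using FX5[OF gC] n by auto
    then obtain k where k: "5 - card (Fx V g) = 5 * k" by (auto simp: dvd_def)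
    thus ?thesis using \<open>card (Fx V g) < 5\<close> by presburger
  qed
  have e5: "?H \<inter> C5 = {}" using c5 Fx_pos[OF _ v] by force
  have s2: "(\<Sum>g\<in>?H \<inter> C2. card (Fx V g)) = card (?H \<inter> C2)" using c2 by simp
  have s3: "(\<Sum>g\<in>?H \<inter> C3. card (Fx V g)) = 2 * card (?H \<inter> C3)" using c3 by simp
  have cH: "card ?H = 12" using stab_card[OF v] n by simp
  have b1: "card {Orb ?H x | x. x \<in> V} * 12 = 5 + card (?H \<inter> C2) + 2 * card (?H \<inter> C3)"
    using burnH(1)[OF v] s2 s3 e5 n cH by simp
  have b2: "card (?H \<inter> C2) + card (?H \<inter> C3) = 11" using burnH(2)[OF v] e5 cH by simp
  have "card {Orb ?H x | x. x \<in> V} = 2" using b1 b2 by presburger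
  thus False by (rule two_orbits[OF v])
qed

lemma case6:
  assumes v: "v \<in> V" and n: "card V = 6"
  shows False
proof -
  let ?H = "Stb G v"
  have c2: "card (Fx V g) = 2" if gC: "g \<in> C2" for g
  proof -
    obtain m where m: "card V - card (Fx V g) = 2 * m" "even m" "0 < m" using FX2[OF gC] by blast
    obtain k where "m = 2 * k" using m(2) by (rule evenE)
    thus ?thesis using m(1,3) n by presburger
  qed
  have c3: "card (Fx V g) = 0 \<or> card (Fx V g) = 3" if gC: "g \<in> C3" for g
  proof -
    have "3 dvd (6 - card (Fx V g))" "card (Fx V g) < 6" using FX3[OF gC] n by auto
    then obtain k where k: "6 - card (Fx V g) = 3 * k" by (auto simp: dvd_def)
    thus ?thesis using \<open>card (Fx V g) < 6\<close> by presburger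
  qed
  have c5: "card (Fx V g) = 1" if gC: "g \<in> C5" for g
  proof -
    have "5 dvd (6 - card (Fx V g))" "card (Fx V g) < 6" using FX5[OF gC] n by auto
    then obtain k where k: "6 - card (Fx V g) = 5 * k" by (auto simp: dvd_def)
    thus ?thesis using \<open>card (Fx V g) < 6\<close> by presburger
  qed
  have "(\<Sum>g\<in>C2. card (Fx V g)) = 30" using c2 cardC(1) by simp
  moreover have "(\<Sum>g\<in>C5. card (Fx V g)) = 24" using c5 cardC(3) by simp
  ultimately have "(\<Sum>g\<in>C3. card (Fx V g)) = 0" using burn_split n by simp
  hence z3: "\<forall>g\<in>C3. card (Fx V g) = 0" using finite_subset[OF C_sub(2) finG] by simp
  have e3: "?H \<inter> C3 = {}" using z3 Fx_pos[OF _ v] by force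
  have s2: "(\<Sum>g\<in>?H \<inter> C2. card (Fx V g)) = 2 * card (?H \<inter> C2)" using c2 by simp
  have s5: "(\<Sum>g\<in>?H \<inter> C5. card (Fx V g)) = card (?H \<inter> C5)" using c5 by simp
  have cH: "card ?H = 10" using stab_card[OF v] n by simp
  have b1: "card {Orb ?H x | x. x \<in> V} * 10 = 6 + 2 * card (?H \<inter> C2) + card (?H \<inter> C5)"
    using burnH(1)[OF v] s2 s5 e3 n cH by simp
  have b2: "card (?H \<inter> C2) + card (?H \<inter> C5) = 9" using burnH(2)[OF v] e3 cH by simp
  have "card {Orb ?H x | x. x \<in> V} = 2" using b1 b2 by presburger
  thus False by (rule two_orbits[OF v])
qed

lemma case15:
  assumes v: "v \<in> V" and n: "card V = 15"
  shows "imprimitive G V"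
proof -
  let ?H = "Stb G v"
  let ?F = "FixH V ?H"
  have c2: "3 \<le> card (Fx V g)" if gC: "g \<in> C2" for g
  proof -
    obtain m where m: "card V - card (Fx V g) = 2 * m" "even m" "0 < m" using FX2[OF gC] by blast
    obtain k where "m = 2 * k" using m(2) by (rule evenE)
    thus ?thesis using m(1,3) n by presburger
  qed
  have "3 * card C2 \<le> (\<Sum>g\<in>C2. card (Fx V g))"
    using sum_bounded_below[of C2 3 "\<lambda>g. card (Fx V g)"] c2 by (simp add: mult.commute)
  hence "(\<Sum>g\<in>C3. card (Fx V g)) + (\<Sum>g\<in>C5. card (Fx V g)) = 0" using burn_split n cardC(1) by simp
  hence z: "\<forall>g\<in>C3. card (Fx V g) = 0" "\<forall>g\<in>C5. card (Fx V g) = 0"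
    using finite_subset[OF C_sub(2) finG] finite_subset[OF C_sub(3) finG] by simp_all
  have fixer: "g \<in> C2" if g: "g \<in> Stb G x" "x \<in> V" "g \<noteq> id" for g x
  proof -
    have gG: "g \<in> G" using g by (auto simp: Stb_def)
    have p: "0 < card (Fx V g)" by (rule Fx_pos[OF g(1,2)])
    have "g \<notin> C3" using z(1) p by auto
    moreover have "g \<notin> C5" using z(2) p by auto
    ultimately show ?thesis using G1[OF gG] g(3) gG by (auto simp: C2_def C3_def C5_def)
  qed
  have sinv: "g (g y) = y" if g: "g \<in> Stb G x" "x \<in> V" for g x y
  proof (cases "g = id")
    case False
    hence "g \<circ> g = id" using fixer[OF g False] by (simp add: C2_def)
    thus ?thesis by (metis comp_apply id_apply)
  qed simp
  have scomm: "g \<circ> h = h \<circ> g" if g: "g \<in> Stb G x" and h: "h \<in> Stb G x" and x: "x \<in> V" for g h x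
  proof
    fix y
    have gh: "g \<circ> h \<in> Stb G x" using g h Stb_pg[OF x] by (rule_tac pg_comp) auto
    have "(g \<circ> h) ((g \<circ> h) (h (g y))) = h (g y)" by (rule sinv[OF gh x])
    thus "(g \<circ> h) y = (h \<circ> g) y" using sinv[OF g x] sinv[OF h x] by simp
  qed
  have cH: "card ?H = 4" using stab_card[OF v] n by simp
  have pgH: "is_pgroup V ?H" by (rule Stb_pg[OF v])
  have orb4: "4 dvd card (Orb ?H x)" if x: "x \<in> V - ?F" for x
  proof -
    have xV: "x \<in> V" using x by blast
    have os: "card (Orb ?H x) * card (Stb ?H x) = 4" using orbit_stab[OF pgH finStb xV] cH by simp
    have "Stb ?H x \<subseteq> {id}"
    proof
      fix t assume t: "t \<in> Stb ?H x"
      show "t \<in> {id}"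
      proof (rule ccontr)
        assume ti: "t \<notin> {id}"
        have tH: "t \<in> ?H" and tx: "t x = x" using t by (auto simp: Stb_def)
        have tG: "t \<in> G" using tH by (auto simp: Stb_def)
        have tGx: "t \<in> Stb G x" using tG tx by (simp add: Stb_def)
        have tC: "t \<in> C2" using fixer[OF tH v] ti by simp
        hence tt: "t \<circ> t = id" by (simp add: C2_def)
        define Ce where "Ce = {g \<in> G. g \<circ> t = t \<circ> g}"
        have cCe: "card Ce = 4" unfolding Ce_def using G3[OF tG _ tt] ti by simp
        have fCe: "finite Ce" unfolding Ce_def using finG by simp
        have "?H \<subseteq> Ce" unfolding Ce_def using scomm[OF _ tH v] Stb_sub by blast
        hence HC: "?H = Ce" using card_subset_eq[OF fCe] cH cCe by metis
        have "Stb G x \<subseteq> Ce" unfolding Ce_def using scomm[OF _ tGx xV] Stb_sub by blast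
        moreover have "card (Stb G x) = 4" using stabs_eq_card[OF v xV] cH by simp
        ultimately have "Stb G x = Ce" using card_subset_eq[OF fCe] cCe by metis
        hence "?H = Stb G x" using HC by simp
        hence "x \<in> ?F" using xV by (auto simp: FixH_def Stb_def)
        thus False using x by blast
      qed
    qed
    moreover have "id \<in> Stb ?H x" using pg_id[OF pgH] by (simp add: Stb_def)
    ultimately have "Stb ?H x = {id}" by blast
    thus ?thesis using os by simp
  qed
  have d: "4 dvd card (V - ?F)" by (rule dvd_nonfixed[OF pgH fin orb4])
  have s: "card ?F + card (V - ?F) = card V" by (rule card_FixH_split[OF v])
  have "?F \<noteq> {}" using v_FixH[OF v] by blast
  hence "card ?F \<noteq> 0" using fin by (simp add: FixH_def)
  moreover have "card ?F \<noteq> 1"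
  proof
    assume "card ?F = 1"
    hence "card (V - ?F) = 14" using s n by simp
    thus False using d by simp
  qed
  ultimately have "2 \<le> card ?F" by simp
  moreover have "?H \<noteq> {id}" using cH by auto
  ultimately show ?thesis by (rule fixblock[OF v])
qed

end


context A5g
begin

lemma nbr_all:
  assumes v: "v \<in> V" and h: "\<And>w. w \<in> V \<Longrightarrow> E v w \<longleftrightarrow> (c \<and> w \<noteq> v)"
  shows False
proof -
  have key: "E u w \<longleftrightarrow> (c \<and> u \<noteq> w)" if u: "u \<in> V" and w: "w \<in> V" for u w
  proof -
    obtain g where g: "g \<in> G" "g u = v" using vt u v by (auto simp: vertex_transitive_def)
    have "E u w \<longleftrightarrow> E (g u) (g w)" using g(1) u w by (simp add: graph_auts_def)
    also have "\<dots> \<longleftrightarrow> (c \<and> g w \<noteq> v)" using h[OF gV[OF g(1) w]] g(2) by simp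
    also have "g w \<noteq> v \<longleftrightarrow> w \<noteq> u" using g permutes_inj[OF gperm[OF g(1)]] by (metis injD)
    finally show ?thesis by auto
  qed
  have "G = {p. p permutes V}" by (rule auts_all[OF sg key])
  hence "card G = fact (card V)" using card_permutations[OF refl fin] by simp
  moreover have "card V \<ge> 5" by (rule cardV_ge)
  hence "(fact 5 :: nat) \<le> fact (card V)" by (rule fact_mono)
  ultimately show False using cardG by (simp add: fact_numeral)
qed

lemma compl_auts:
  defines "E' \<equiv> \<lambda>u w. u \<in> V \<and> w \<in> V \<and> u \<noteq> w \<and> \<not> E u w"
  shows "graph_auts V E' = G" and "simple_graph V E'"
proof -
  have sym: "E a b \<Longrightarrow> E b a" for a b using sg by (simp add: simple_graph_def)
  show "simple_graph V E'" unfolding E'_def simple_graph_def using sym by blast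
  have irr: "\<not> E x x" for x using sg by (simp add: simple_graph_def)
  have "(\<forall>u\<in>V. \<forall>w\<in>V. E' (g u) (g w) \<longleftrightarrow> E' u w) \<longleftrightarrow> (\<forall>u\<in>V. \<forall>w\<in>V. E (g u) (g w) \<longleftrightarrow> E u w)"
    if g: "g permutes V" for g
  proof -
    have gV': "\<And>u. u \<in> V \<Longrightarrow> g u \<in> V" using g by (simp add: permutes_in_image)
    have gi: "\<And>u w. g u = g w \<longleftrightarrow> u = w" using permutes_inj[OF g] by (metis injD)
    show ?thesis
    proof
      assume a: "\<forall>u\<in>V. \<forall>w\<in>V. E' (g u) (g w) \<longleftrightarrow> E' u w"
      show "\<forall>u\<in>V. \<forall>w\<in>V. E (g u) (g w) \<longleftrightarrow> E u w"
      proof (intro ballI)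
        fix u w assume u: "u \<in> V" and w: "w \<in> V"
        show "E (g u) (g w) \<longleftrightarrow> E u w"
        proof (cases "u = w")
          case True thus ?thesis using irr by simp
        next
          case False thus ?thesis using a u w gV' gi unfolding E'_def by auto
        qed
      qed
    next
      assume a: "\<forall>u\<in>V. \<forall>w\<in>V. E (g u) (g w) \<longleftrightarrow> E u w"
      show "\<forall>u\<in>V. \<forall>w\<in>V. E' (g u) (g w) \<longleftrightarrow> E' u w"
        using a gV' gi unfolding E'_def by auto
    qed
  qed
  thus "graph_auts V E' = G" unfolding graph_auts_def by blast
qed

lemma div6: "(d::nat) dvd 6 \<Longrightarrow> d \<in> {1,2,3,6}"
proof -
  assume d: "d dvd 6"
  have "d \<noteq> 0" using d by (rule_tac ccontr) simp
  moreover have "d \<le> 6" using d by (rule dvd_imp_le) simp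
  ultimately have "d \<in> set [1..<7]" by simp
  hence "d \<in> set (filter (\<lambda>d. d dvd 6) [1..<7])" using d by simp
  also have "filter (\<lambda>d. d dvd (6::nat)) [1..<7] = [1,2,3,6]" by code_simp
  finally show ?thesis by simp
qed

lemma case10_final:
  assumes v: "v \<in> V" and n: "card V = 10"
    and P: "P \<subseteq> V - {v}" "card P = 3" and Q: "Q \<subseteq> V - {v}" and PQ: "P \<inter> Q = {}" "P \<union> Q = V - {v}"
    and trP: "\<And>x y. x \<in> P \<Longrightarrow> y \<in> P \<Longrightarrow> \<exists>h\<in>Stb G v. h x = y"
    and trQ: "\<And>x y. x \<in> Q \<Longrightarrow> y \<in> Q \<Longrightarrow> \<exists>h\<in>Stb G v. h x = y"
  shows False
proof -
  have inv: "E v x \<longleftrightarrow> E v y" if "x \<in> V" "h \<in> Stb G v" "h x = y" for x y h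
  proof -
    have hG: "h \<in> G" and hv: "h v = v" using that(2) by (auto simp: Stb_def)
    have "E (h v) (h x) \<longleftrightarrow> E v x" using hG v that(1) by (simp add: graph_auts_def)
    thus ?thesis using hv that(3) by simp
  qed
  have Pc: "(\<forall>x\<in>P. E v x) \<or> (\<forall>x\<in>P. \<not> E v x)"
  proof (cases "\<exists>x\<in>P. E v x")
    case True
    then obtain x where x: "x \<in> P" "E v x" by blast
    have "E v y" if "y \<in> P" for y using trP[OF x(1) that] inv x P(1) by blast
    thus ?thesis by blast
  qed blast
  have Qc: "(\<forall>x\<in>Q. E v x) \<or> (\<forall>x\<in>Q. \<not> E v x)"
  proof (cases "\<exists>x\<in>Q. E v x")
    case True
    then obtain x where x: "x \<in> Q" "E v x" by blast
    have "E v y" if "y \<in> Q" for y using trQ[OF x(1) that] inv x Q by blast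
    thus ?thesis by blast
  qed blast
  have irr: "\<not> E x x" for x using sg by (simp add: simple_graph_def)
  have Ev: "E v w \<Longrightarrow> w \<in> V" for w using sg by (simp add: simple_graph_def)
  have cover: "w \<in> V \<Longrightarrow> w \<noteq> v \<Longrightarrow> w \<in> P \<or> w \<in> Q" for w using PQ(2) by blast
  have trG: "\<exists>h\<in>G. h v = v \<and> h x = y" if xy: "x \<in> S" "y \<in> S" and S: "S = P \<or> S = Q" for x y S
  proof -
    obtain h where "h \<in> Stb G v" "h x = y" using S xy trP trQ by blast
    thus ?thesis by (auto simp: Stb_def)
  qed
  show False
  proof (cases "\<forall>x\<in>P. E v x")
    case PN: True
    show False
    proof (cases "\<forall>x\<in>Q. E v x")
      case True
      have "E v w \<longleftrightarrow> (True \<and> w \<noteq> v)" if "w \<in> V" for w using that PN True cover irr by blast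
      thus False by (rule nbr_all[OF v])
    next
      case False
      hence QN: "\<forall>x\<in>Q. \<not> E v x" using Qc by blast
      have Neq: "{w\<in>V. E v w} = P" using PN QN cover irr P(1) Ev by blast
      have Meq: "V - {v} - {w\<in>V. E v w} = Q" using Neq PQ by blast
      show False
      proof (rule petersen[OF fin sg vt _ v n])
        show "\<forall>g\<in>graph_auts V E. evenperm g" using G_even by blast
        show "card {w\<in>V. E v w} = 3" using Neq P(2) by simp
        show "\<forall>x\<in>{w\<in>V. E v w}. \<forall>y\<in>{w\<in>V. E v w}. \<exists>h\<in>graph_auts V E. h v = v \<and> h x = y"
          unfolding Neq using trG by blast
        show "\<forall>x\<in>V - {v} - {w\<in>V. E v w}. \<forall>y\<in>V - {v} - {w\<in>V. E v w}. \<exists>h\<in>graph_auts V E. h v = v \<and> h x = y"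
          unfolding Meq using trG by blast
      qed
    qed
  next
    case False
    hence PN: "\<forall>x\<in>P. \<not> E v x" using Pc by blast
    show False
    proof (cases "\<forall>x\<in>Q. E v x")
      case QN: True
      define E' where "E' = (\<lambda>u w. u \<in> V \<and> w \<in> V \<and> u \<noteq> w \<and> \<not> E u w)"
      have aut': "graph_auts V E' = G" and sg': "simple_graph V E'" using compl_auts unfolding E'_def by auto
      have Neq: "{w\<in>V. E' v w} = P" using PN QN P(1) v cover unfolding E'_def by auto
      have Meq: "V - {v} - {w\<in>V. E' v w} = Q" using Neq PQ by blast
      have vt': "vertex_transitive V E'" using vt aut' by (simp add: vertex_transitive_def)
      show False
      proof (rule petersen[OF fin sg' vt' _ v n])
        show "\<forall>g\<in>graph_auts V E'. evenperm g" using G_even aut' by blast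
        show "card {w\<in>V. E' v w} = 3" using Neq P(2) by simp
        show "\<forall>x\<in>{w\<in>V. E' v w}. \<forall>y\<in>{w\<in>V. E' v w}. \<exists>h\<in>graph_auts V E'. h v = v \<and> h x = y"
          unfolding Neq aut' using trG by blast
        show "\<forall>x\<in>V - {v} - {w\<in>V. E' v w}. \<forall>y\<in>V - {v} - {w\<in>V. E' v w}. \<exists>h\<in>graph_auts V E'. h v = v \<and> h x = y"
          unfolding Meq aut' using trG by blast
      qed
    next
      case False
      hence QN: "\<forall>x\<in>Q. \<not> E v x" using Qc by blast
      have "E v w \<longleftrightarrow> (False \<and> w \<noteq> v)" if "w \<in> V" for w using that PN QN cover irr by blast
      thus False by (rule nbr_all[OF v])
    qed
  qed
qed

lemma case10:
  assumes v: "v \<in> V" and n: "card V = 10"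
  shows False
proof -
  let ?H = "Stb G v"
  have c2: "2 \<le> card (Fx V g)" if gC: "g \<in> C2" for g
  proof -
    obtain m where m: "card V - card (Fx V g) = 2 * m" "even m" "0 < m" using FX2[OF gC] by blast
    obtain k where "m = 2 * k" using m(2) by (rule evenE)
    thus ?thesis using m(1,3) n by presburger
  qed
  have c3: "1 \<le> card (Fx V g)" if gC: "g \<in> C3" for g
  proof -
    have "3 dvd (10 - card (Fx V g))" using FX3[OF gC] n by auto
    then obtain k where "10 - card (Fx V g) = 3 * k" by (auto simp: dvd_def)
    thus ?thesis by presburger
  qed
  have fC2: "finite C2" "finite C3" "finite C5" using finite_subset[OF C_sub(1) finG]
    finite_subset[OF C_sub(2) finG] finite_subset[OF C_sub(3) finG] by auto
  have s2: "2 * card C2 \<le> (\<Sum>g\<in>C2. card (Fx V g))"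
    using sum_bounded_below[of C2 2 "\<lambda>g. card (Fx V g)"] c2 by (simp add: mult.commute)
  have s3: "1 * card C3 \<le> (\<Sum>g\<in>C3. card (Fx V g))"
    using sum_bounded_below[of C3 1 "\<lambda>g. card (Fx V g)"] c3 by (simp add: mult.commute)
  have bs: "card V + (\<Sum>g\<in>C2. card (Fx V g)) + (\<Sum>g\<in>C3. card (Fx V g)) + (\<Sum>g\<in>C5. card (Fx V g)) = 60"
    by (rule burn_split)
  have e2: "(\<Sum>g\<in>C2. card (Fx V g)) \<le> 2 * card C2" using s2 s3 bs n cardC by simp
  have e3: "(\<Sum>g\<in>C3. card (Fx V g)) \<le> 1 * card C3" using s2 s3 bs n cardC by simp
  have e5: "(\<Sum>g\<in>C5. card (Fx V g)) = 0" using s2 s3 bs n cardC by simp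
  have f2: "card (Fx V g) = 2" if "g \<in> C2" for g by (rule sum_const_eq[OF fC2(1) c2 e2 that])
  have f3: "card (Fx V g) = 1" if "g \<in> C3" for g by (rule sum_const_eq[OF fC2(2) c3 e3 that])
  have f5: "card (Fx V g) = 0" if "g \<in> C5" for g using e5 fC2(3) that by simp
  have h5: "?H \<inter> C5 = {}" using f5 Fx_pos[OF _ v] by force
  have sh2: "(\<Sum>g\<in>?H \<inter> C2. card (Fx V g)) = 2 * card (?H \<inter> C2)" using f2 by simp
  have sh3: "(\<Sum>g\<in>?H \<inter> C3. card (Fx V g)) = card (?H \<inter> C3)" using f3 by simp
  have cH: "card ?H = 6" using stab_card[OF v] n by simp
  have b1: "card {Orb ?H x | x. x \<in> V} * 6 = 10 + 2 * card (?H \<inter> C2) + card (?H \<inter> C3)"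
    using burnH(1)[OF v] sh2 sh3 h5 n cH by simp
  have b2: "card (?H \<inter> C2) + card (?H \<inter> C3) = 5" using burnH(2)[OF v] h5 cH by simp
  have o3: "card {Orb ?H x | x. x \<in> V} = 3" using b1 b2 by presburger
  let ?Os = "{Orb ?H x | x. x \<in> V}"
  have pgH: "is_pgroup V ?H" by (rule Stb_pg[OF v])
  have vO: "{v} \<in> ?Os" using Orb_Stb_v[OF v] v by blast
  have "card (?Os - {{v}}) = 2" using o3 vO finOrbs by simp
  hence "\<exists>x y. ?Os - {{v}} = {x, y} \<and> x \<noteq> y" by (simp only: card_2_iff)
  then obtain O1 O2 where O12: "?Os - {{v}} = {O1, O2}" "O1 \<noteq> O2" by blast
  have Oprops: "\<exists>w\<in>V. Oo = Orb ?H w \<and> Oo \<noteq> {v}" if oo: "Oo \<in> {O1, O2}" for Oo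
  proof -
    have "Oo \<in> ?Os - {{v}}" using oo O12(1) by simp
    hence "Oo \<in> ?Os" "Oo \<noteq> {v}" by auto
    thus ?thesis by blast
  qed
  obtain w1 where w1: "w1 \<in> V" "O1 = Orb ?H w1" "O1 \<noteq> {v}" using Oprops[of O1] by blast
  obtain w2 where w2: "w2 \<in> V" "O2 = Orb ?H w2" "O2 \<noteq> {v}" using Oprops[of O2] by blast
  have notv: "v \<notin> Orb ?H w" if "w \<in> V" "Orb ?H w \<noteq> {v}" for w
  proof
    assume "v \<in> Orb ?H w"
    hence "Orb ?H v = Orb ?H w" by (rule Orb_eq[OF pgH that(1)])
    thus False using Orb_Stb_v[OF v] that(2) by simp
  qed
  have sub1: "O1 \<subseteq> V - {v}" using Orb_sub[OF pgH w1(1)] notv[OF w1(1)] w1 by blast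
  have sub2: "O2 \<subseteq> V - {v}" using Orb_sub[OF pgH w2(1)] notv[OF w2(1)] w2 by blast
  have dj: "O1 \<inter> O2 = {}"
  proof (rule ccontr)
    assume "O1 \<inter> O2 \<noteq> {}"
    hence "Orb ?H w1 = Orb ?H w2" using Orb_disj[OF pgH w2(1) w1(1)] w1 w2 by blast
    thus False using w1 w2 O12(2) by simp
  qed
  have cov: "O1 \<union> O2 = V - {v}"
  proof
    show "O1 \<union> O2 \<subseteq> V - {v}" using sub1 sub2 by blast
    show "V - {v} \<subseteq> O1 \<union> O2"
    proof
      fix x assume x: "x \<in> V - {v}"
      have xo: "x \<in> Orb ?H x" by (rule Orb_self[OF pgH])
      have "Orb ?H x \<in> ?Os" using x by blast
      moreover have "Orb ?H x \<noteq> {v}" using xo x by auto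
      ultimately have "Orb ?H x \<in> {O1, O2}" using O12(1) by blast
      thus "x \<in> O1 \<union> O2" using xo by blast
    qed
  qed
  have cs: "card O1 + card O2 = 9"
  proof -
    have "card (O1 \<union> O2) = 9" using cov fin v n by simp
    moreover have "finite O1" "finite O2" using sub1 sub2 fin by (auto intro: finite_subset)
    ultimately show ?thesis using dj by (simp add: card_Un_disjoint)
  qed
  have dv: "card (Orb ?H w) dvd 6" if "w \<in> V" for w
    using orbit_stab[OF pgH finStb that] cH by (metis dvd_triv_left)
  have d1: "card O1 \<in> {1,2,3,6}" using div6[OF dv[OF w1(1)]] w1 by simp
  have d2: "card O2 \<in> {1,2,3,6}" using div6[OF dv[OF w2(1)]] w2 by simp
  have tr: "\<exists>h\<in>?H. h x = y" if "w \<in> V" "x \<in> Orb ?H w" "y \<in> Orb ?H w" for w x y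
  proof -
    have "Orb ?H x = Orb ?H w" using Orb_eq[OF pgH that(1,2)] .
    hence "y \<in> Orb ?H x" using that(3) by simp
    thus ?thesis by (auto simp: Orb_def)
  qed
  have "card O1 = 3 \<or> card O2 = 3" using d1 d2 cs by auto
  thus False
  proof
    assume c: "card O1 = 3"
    show False
      by (rule case10_final[OF v n sub1 c sub2 dj cov]) (use tr w1 w2 in auto)
  next
    assume c: "card O2 = 3"
    have dj': "O2 \<inter> O1 = {}" "O2 \<union> O1 = V - {v}" using dj cov by auto
    show False
      by (rule case10_final[OF v n sub2 c sub1 dj']) (use tr w1 w2 in auto)
  qed
qed

end

theorem mainTheorem11:
  fixes V :: "'a set" and E :: "'a \<Rightarrow> 'a \<Rightarrow> bool"
  assumes "finite V" and "simple_graph V E"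
    and "vertex_transitive V E"
    and "Aut V E \<cong> alt_group 5"
  shows "imprimitive (graph_auts V E) V"
proof -
  interpret A5g V E using assms by unfold_locales
  obtain v where v: "v \<in> V" using V_ne by blast
  have sc: "card V * card (Stb G v) = 60" by (rule stab_card[OF v])
  have "card V \<in> {5,6,10,12,15,20,30,60}" by (rule n_cases[OF v])
  thus ?thesis
  proof (elim insertE)
    assume "card V = 5" thus ?thesis using case5[OF v] by blast
  next
    assume "card V = 6" thus ?thesis using case6[OF v] by blast
  next
    assume "card V = 10" thus ?thesis using case10[OF v] by blast
  next
    assume n: "card V = 12"
    hence "card (Stb G v) = 5" using sc by simp
    thus ?thesis using case_prime[OF v] n by simp
  next
    assume "card V = 15" thus ?thesis using case15[OF v] by blast
  next
    assume n: "card V = 20"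
    hence "card (Stb G v) = 3" using sc by simp
    thus ?thesis using case_prime[OF v] n by simp
  next
    assume n: "card V = 30"
    hence "card (Stb G v) = 2" using sc by simp
    thus ?thesis using case_prime[OF v] n by simp
  next
    assume "card V = 60" thus ?thesis using case60[OF v] by blast
  qed simp
qed


end
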